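(* Let $n, m \in \mathbb{N}$ with $n \ge 1$, let $N_1,\dots,N_n \in \mathbb{N}$, let $k_{i,j}, q_{i,j} \in \mathbb{R}$ for $i \in [n]$, $j \in [N_i]$, let $f_1,\dots,f_m \in \mathbb{R}[x_1,\dots,x_n]$ and $p_1,\dots,p_m \in \mathbb{R}$, let $M \in \mathbb{R}_+$, and let $\varphi:\mathbb{R}^n_+ \to \mathbb{R}_+$ be a continuous piecewise polynomial payoff function. Let $d$ be the smallest even integer with $d \ge \max_{i,j,\ell}\{\deg(\varphi),\deg(f_{i,j}),\deg(f_\ell)\}+1$, where $f_{i,j}(\mathbf{x})=\max(0,x_i-k_{i,j})$. Consider the problem of maximizing (respectively minimizing) $\int_{\mathbb{R}^n_+}\varphi\,\mathrm{d}\mu$ over positive finite Borel measures $\mu$ on $\mathbb{R}^n_+$ subject to $\int \max(0,x_i-k_{i,j})\,\mathrm{d}\mu = q_{i,j}$ for all $i\in[n]$, $j\in[N_i]$; $\int f_\ell\,\mathrm{d}\mu = p_\ell$ for all $\ell\in[m]$; $\int\mathrm{d}\mu = 1$; and $\int \|\mathbf{x}\|_2^d\,\mathrm{d}\mu \le M$. If this problem is feasible, then its optimal value is attained by an atomic measure with finitely many atoms, namely at most $n\sum_{i=1}^n N_i + m + 3$ atoms.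
   Context: $\mathbb{R}_+=[0,\infty)$, $[N]=\{1,\dots,N\}$, $\|\cdot\|_2$ is the Euclidean norm. An atomic measure with finitely many atoms is a finite nonnegative combination $\sum_j \alpha_j\delta_{\mathbf{x}_j}$ of Dirac measures. For a piecewise polynomial function, $\deg$ denotes the largest degree of its polynomial pieces. *)

theory Defs
  imports "HOL-Analysis.Analysis"
begin

definition nonneg_orthant :: "(real ^ 'n) set" where
  "nonneg_orthant = {x. \<forall>i. 0 \<le> x $ i}"

definition is_poly_deg :: "nat \<Rightarrow> (real ^ 'n \<Rightarrow> real) \<Rightarrow> bool" where
  "is_poly_deg D f \<longleftrightarrow>
     (\<exists>c :: ('n \<Rightarrow> nat) \<Rightarrow> real.
        f = (\<lambda>x. \<Sum>\<alpha>\<in>{\<alpha>::'n\<Rightarrow>nat. sum \<alpha> UNIV \<le> D}. c \<alpha> * (\<Prod>i\<in>UNIV. (x $ i) ^ \<alpha> i)))"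

definition is_poly :: "(real ^ 'n \<Rightarrow> real) \<Rightarrow> bool" where
  "is_poly f \<longleftrightarrow> (\<exists>D. is_poly_deg D f)"

definition poly_deg :: "(real ^ 'n \<Rightarrow> real) \<Rightarrow> nat" where
  "poly_deg f = (LEAST D. is_poly_deg D f)"

definition is_pw_poly_deg :: "(real ^ 'n) set \<Rightarrow> nat \<Rightarrow> (real ^ 'n \<Rightarrow> real) \<Rightarrow> bool" where
  "is_pw_poly_deg S D \<phi> \<longleftrightarrow>
     (\<exists>P :: ((real ^ 'n) set \<times> (real ^ 'n \<Rightarrow> real)) set.
        finite P \<and> S \<subseteq> (\<Union>(A, g)\<in>P. A) \<and>
        (\<forall>(A, g)\<in>P. is_poly_deg D g \<and> (\<forall>x\<in>A \<inter> S. \<phi> x = g x)))"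

definition is_pw_poly :: "(real ^ 'n) set \<Rightarrow> (real ^ 'n \<Rightarrow> real) \<Rightarrow> bool" where
  "is_pw_poly S \<phi> \<longleftrightarrow> (\<exists>D. is_pw_poly_deg S D \<phi>)"

definition pw_poly_deg :: "(real ^ 'n) set \<Rightarrow> (real ^ 'n \<Rightarrow> real) \<Rightarrow> nat" where
  "pw_poly_deg S \<phi> = (LEAST D. is_pw_poly_deg S D \<phi>)"

definition feasible_measures ::
  "('n \<Rightarrow> nat) \<Rightarrow> ('n \<Rightarrow> nat \<Rightarrow> real) \<Rightarrow> ('n \<Rightarrow> nat \<Rightarrow> real) \<Rightarrow> nat \<Rightarrow>
   (nat \<Rightarrow> real ^ 'n \<Rightarrow> real) \<Rightarrow> (nat \<Rightarrow> real) \<Rightarrow> real \<Rightarrow> nat \<Rightarrow> (real ^ 'n \<Rightarrow> real) \<Rightarrow>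
   (real ^ 'n) measure set" where
  "feasible_measures N k q m f p M d \<phi> =
     {\<mu>. sets \<mu> = sets borel \<and> finite_measure \<mu> \<and>
          emeasure \<mu> (UNIV - nonneg_orthant) = 0 \<and>
          integrable \<mu> \<phi> \<and>
          (\<forall>i. \<forall>j\<in>{1..N i}. integrable \<mu> (\<lambda>x. max 0 (x $ i - k i j)) \<and>
                 (\<integral>x. max 0 (x $ i - k i j) \<partial>\<mu>) = q i j) \<and>
          (\<forall>l\<in>{1..m}. integrable \<mu> (f l) \<and> (\<integral>x. f l x \<partial>\<mu>) = p l) \<and>
          emeasure \<mu> (space \<mu>) = 1 \<and>
          (\<integral>\<^sup>+x. ennreal (norm x ^ d) \<partial>\<mu>) \<le> ennreal M}"

definition atomic_measure_le :: "nat \<Rightarrow> (real ^ 'n) measure \<Rightarrow> bool" where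
  "atomic_measure_le K \<mu> \<longleftrightarrow>
     (\<exists>X :: (real ^ 'n) set. \<exists>\<alpha> :: real ^ 'n \<Rightarrow> real.
        finite X \<and> card X \<le> K \<and> (\<forall>x\<in>X. 0 \<le> \<alpha> x) \<and> sets \<mu> = sets borel \<and>
        (\<forall>A\<in>sets borel. emeasure \<mu> A = (\<Sum>x\<in>X \<inter> A. ennreal (\<alpha> x))))"

end

theory Submission
  imports Defs "HOL-Probability.Probability"
begin

definition supp_in :: "'c set \<Rightarrow> ('c \<Rightarrow> real) \<Rightarrow> bool" where
  "supp_in I x \<longleftrightarrow> (\<forall>i. i \<notin> I \<longrightarrow> x i = 0)"

lemma cone_caseB:
  fixes D :: "('c \<Rightarrow> real) set" and j :: 'c
  assumes jI: "j \<notin> I" and finI: "finite I"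
    and Dsupp: "\<forall>x\<in>D. supp_in (insert j I) x"
    and add: "\<forall>x\<in>D. \<forall>y\<in>D. (\<lambda>i. x i + y i) \<in> D"
    and scale: "\<forall>x\<in>D. \<forall>s\<ge>0. (\<lambda>i. s * x i) \<in> D"
    and tot: "\<forall>x. supp_in (insert j I) x \<longrightarrow> x \<in> D \<or> (\<lambda>i. - x i) \<in> D"
    and notall: "\<exists>x. supp_in (insert j I) x \<and> x \<notin> D"
    and allE: "\<forall>y. supp_in I y \<longrightarrow> (\<exists>t. (\<lambda>i. y i + t * (if i = j then 1 else 0)) \<in> D)"
  shows "\<exists>a. (\<exists>i\<in>insert j I. a i \<noteq> 0) \<and> (\<forall>x\<in>D. (\<Sum>i\<in>insert j I. a i * x i) \<le> 0)"
proof -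
  define e :: "'c \<Rightarrow> real" where "e = (\<lambda>i. if i = j then 1 else 0)"
  have addD: "z \<in> D" if "x \<in> D" "y \<in> D" "z = (\<lambda>i. x i + y i)" for x y z
    using add that by blast
  have scaleD: "z \<in> D" if "x \<in> D" "s \<ge> 0" "z = (\<lambda>i. s * x i)" for x s z
    using scale that by blast
  have memD_cong: "y \<in> D" if "x \<in> D" "\<And>i. x i = y i" for x y
  proof -
    have "x = y" using that(2) by (simp add: fun_eq_iff)
    then show ?thesis using that(1) by simp
  qed
  have zeroD: "(\<lambda>i. 0) \<in> D"
    using tot[rule_format, of "\<lambda>i. 0"] by (auto simp: supp_in_def)
  have suppI: "supp_in I (\<lambda>i. if i = j then 0 else x i)" if "supp_in (insert j I) x" for x
    using that by (auto simp: supp_in_def)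
  have decomp: "x = (\<lambda>i. (if i = j then 0 else x i) + x j * e i)" for x
    by (auto simp: e_def)
  have not_both: "\<not> (e \<in> D \<and> (\<lambda>i. - e i) \<in> D)"
  proof
    assume both: "e \<in> D \<and> (\<lambda>i. - e i) \<in> D"
    obtain x where x: "supp_in (insert j I) x" "x \<notin> D" using notall by blast
    obtain t where t: "(\<lambda>i. (if i = j then 0 else x i) + t * e i) \<in> D"
      using allE[rule_format, OF suppI[OF x(1)]] unfolding e_def by blast
    have "x \<in> D"
    proof (cases "x j - t \<ge> 0")
      case True
      have h: "(\<lambda>i. (x j - t) * e i) \<in> D" using scaleD both True by blast
      show ?thesis by (rule addD[OF t h]) (auto simp: e_def fun_eq_iff algebra_simps)
    next
      case False
      have h: "(\<lambda>i. (t - x j) * (- e i)) \<in> D" using scaleD both False by force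
      show ?thesis by (rule addD[OF t h]) (auto simp: e_def fun_eq_iff algebra_simps)
    qed
    with x show False by blast
  qed
  obtain \<sigma> :: real where sig: "\<sigma> * \<sigma> = 1" "(\<lambda>i. \<sigma> * e i) \<in> D" "(\<lambda>i. - (\<sigma> * e i)) \<notin> D"
  proof (cases "e \<in> D")
    case True
    then show ?thesis using not_both that[of 1] by auto
  next
    case False
    have "supp_in (insert j I) e" by (auto simp: supp_in_def e_def)
    then have "(\<lambda>i. - e i) \<in> D" using tot False by blast
    then show ?thesis using False that[of "-1"] by auto
  qed
  define u where "u = (\<lambda>i. \<sigma> * e i)"
  have uD: "u \<in> D" using sig u_def by simp
  have negu: "(\<lambda>i. - u i) \<notin> D" using sig u_def by simp
  define T where "T = (\<lambda>y. {t. (\<lambda>i. y i + t * u i) \<in> D})"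
  have upT: "t' \<in> T y" if "t \<in> T y" "t \<le> t'" for y t t'
  proof -
    have "(\<lambda>i. (t' - t) * u i) \<in> D" using scaleD uD that by auto
    from addD[OF _ this, of "\<lambda>i. y i + t * u i"] that show ?thesis
      by (auto simp: T_def algebra_simps)
  qed
  have neT: "\<sigma> * t \<in> T y" if "(\<lambda>i. y i + t * e i) \<in> D" for y t
  proof -
    have "(\<lambda>i. y i + (\<sigma> * t) * u i) = (\<lambda>i. y i + t * e i)"
      using sig(1) by (auto simp: u_def algebra_simps)
    then show ?thesis using that by (simp add: T_def)
  qed
  have neT': "T y \<noteq> {}" if "supp_in I y" for y
    using allE[rule_format, OF that] neT unfolding e_def by blast
  have bdd: "bdd_below (T y)" if "supp_in I y" for y
  proof (rule ccontr)
    assume nb: "\<not> bdd_below (T y)"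
    have "supp_in I (\<lambda>i. - y i)" using that by (auto simp: supp_in_def)
    then obtain s where s: "s \<in> T (\<lambda>i. - y i)" using neT' by blast
    obtain t where t: "t \<in> T y" "t < - s - 1"
      using nb unfolding bdd_below_def by (metis not_le)
    have "- s - 1 \<in> T y" using upT t by auto
    then have "(\<lambda>i. y i + (- s - 1) * u i) \<in> D" by (simp add: T_def)
    moreover have "(\<lambda>i. - y i + s * u i) \<in> D" using s by (simp add: T_def)
    ultimately have "(\<lambda>i. - u i) \<in> D"
      by (rule addD) (auto simp: algebra_simps)
    with negu show False by simp
  qed
  define \<tau> where "\<tau> = (\<lambda>y. Inf (T y))"
  have tau_le: "\<tau> y \<le> t" if y: "supp_in I y" and t: "t \<in> T y" for y t
    unfolding \<tau>_def using cInf_lower[OF t bdd[OF y]] .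
  have tau_gt: "t \<in> T y" if y: "supp_in I y" and lt: "\<tau> y < t" for y t
  proof -
    obtain t' where "t' \<in> T y" "t' < t"
      using lt cInf_less_iff[OF neT'[OF y] bdd[OF y]] unfolding \<tau>_def by blast
    then show ?thesis using upT by auto
  qed
  have supp0: "supp_in I (\<lambda>i. 0)" by (simp add: supp_in_def)
  have suppadd: "supp_in I (\<lambda>i. y1 i + y2 i)" if "supp_in I y1" "supp_in I y2" for y1 y2
    using that by (simp add: supp_in_def)
  have suppneg: "supp_in I (\<lambda>i. - y i)" if "supp_in I y" for y
    using that by (simp add: supp_in_def)
  have suppscale: "supp_in I (\<lambda>i. s * y i)" if "supp_in I y" for y s
    using that by (simp add: supp_in_def)
  have tau0: "\<tau> (\<lambda>i. 0) = 0"
  proof -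
    have "0 \<in> T (\<lambda>i. 0)" using zeroD by (simp add: T_def)
    then have le: "\<tau> (\<lambda>i. 0) \<le> 0" using tau_le supp0 by blast
    have "\<not> \<tau> (\<lambda>i. 0) < 0"
    proof
      assume lt: "\<tau> (\<lambda>i. 0) < 0"
      define t where "t = \<tau> (\<lambda>i. 0) / 2"
      have "t < 0" "\<tau> (\<lambda>i. 0) < t" using lt by (auto simp: t_def)
      then have "t \<in> T (\<lambda>i. 0)" using tau_gt supp0 by blast
      then have h: "(\<lambda>i. t * u i) \<in> D" by (simp add: T_def)
      have "(\<lambda>i. (- 1 / t) * (t * u i)) \<in> D" 
        by (rule scaleD[OF h _ refl]) (use \<open>t < 0\<close> in simp)
      moreover have "(\<lambda>i. (- 1 / t) * (t * u i)) = (\<lambda>i. - u i)" using \<open>t < 0\<close> by auto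
      ultimately show False using negu by simp
    qed
    with le show ?thesis by simp
  qed
  have subadd: "\<tau> (\<lambda>i. y1 i + y2 i) \<le> \<tau> y1 + \<tau> y2" if y: "supp_in I y1" "supp_in I y2" for y1 y2
  proof (rule field_le_epsilon)
    fix \<epsilon> :: real assume "\<epsilon> > 0"
    then have "\<tau> y1 + \<epsilon>/2 \<in> T y1" "\<tau> y2 + \<epsilon>/2 \<in> T y2" using tau_gt y by auto
    then have "(\<lambda>i. (y1 i + (\<tau> y1 + \<epsilon>/2) * u i) + (y2 i + (\<tau> y2 + \<epsilon>/2) * u i)) \<in> D"
      using add by (auto simp: T_def)
    then have "\<tau> y1 + \<tau> y2 + \<epsilon> \<in> T (\<lambda>i. y1 i + y2 i)"
      by (simp add: T_def algebra_simps)
    then show "\<tau> (\<lambda>i. y1 i + y2 i) \<le> \<tau> y1 + \<tau> y2 + \<epsilon>"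
      using tau_le suppadd[OF y] by blast
  qed
  have negle: "\<tau> (\<lambda>i. - y i) \<le> - \<tau> y" if y: "supp_in I y" for y
  proof (rule ccontr)
    assume nle: "\<not> \<tau> (\<lambda>i. - y i) \<le> - \<tau> y"
    define t where "t = (\<tau> y - \<tau> (\<lambda>i. - y i)) / 2"
    have t1: "t < \<tau> y" using nle unfolding t_def by (simp add: field_simps)
    have t2: "- t < \<tau> (\<lambda>i. - y i)" using nle unfolding t_def by (simp add: field_simps)
    have "t \<notin> T y" using tau_le[OF y] t1 by force
    then have nd: "(\<lambda>i. y i + t * u i) \<notin> D" by (simp add: T_def)
    have "supp_in (insert j I) (\<lambda>i. y i + t * u i)"
      using y by (auto simp: supp_in_def u_def e_def)
    then have "(\<lambda>i. - (y i + t * u i)) \<in> D" using tot nd by blast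
    moreover have "(\<lambda>i. - y i + (- t) * u i) = (\<lambda>i. - (y i + t * u i))" by (simp add: fun_eq_iff)
    ultimately have "- t \<in> T (\<lambda>i. - y i)" unfolding T_def mem_Collect_eq by metis
    then have "\<tau> (\<lambda>i. - y i) \<le> - t" using tau_le suppneg[OF y] by blast
    with t2 show False by simp
  qed
  have odd: "\<tau> (\<lambda>i. - y i) = - \<tau> y" if y: "supp_in I y" for y
  proof -
    have "\<tau> (\<lambda>i. y i + - y i) \<le> \<tau> y + \<tau> (\<lambda>i. - y i)"
      using subadd y suppneg by blast
    then have "0 \<le> \<tau> y + \<tau> (\<lambda>i. - y i)" using tau0 by simp
    with negle[OF y] show ?thesis by simp
  qed
  have addt: "\<tau> (\<lambda>i. y1 i + y2 i) = \<tau> y1 + \<tau> y2" if y: "supp_in I y1" "supp_in I y2" for y1 y2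
  proof -
    have "\<tau> (\<lambda>i. - y1 i + - y2 i) \<le> \<tau> (\<lambda>i. - y1 i) + \<tau> (\<lambda>i. - y2 i)"
      using subadd suppneg y by blast
    moreover have "(\<lambda>i. - y1 i + - y2 i) = (\<lambda>i. - (y1 i + y2 i))" by (auto simp: algebra_simps)
    ultimately have "- \<tau> (\<lambda>i. y1 i + y2 i) \<le> - \<tau> y1 - \<tau> y2"
      using odd suppadd y by (metis diff_conv_add_uminus)
    with subadd[OF y] show ?thesis by simp
  qed
  have hom_pos: "\<tau> (\<lambda>i. s * y i) \<le> s * \<tau> y" if y: "supp_in I y" and s: "s > 0" for y s
  proof (rule field_le_epsilon)
    fix \<epsilon> :: real assume "\<epsilon> > 0"
    then have "\<tau> y + \<epsilon> / s \<in> T y" using tau_gt y s by auto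
    then have "(\<lambda>i. s * (y i + (\<tau> y + \<epsilon> / s) * u i)) \<in> D"
      using scaleD s by (auto simp: T_def)
    then have "s * (\<tau> y + \<epsilon> / s) \<in> T (\<lambda>i. s * y i)"
      unfolding T_def mem_Collect_eq by (rule memD_cong) (use s in \<open>simp add: field_simps\<close>)
    then have "\<tau> (\<lambda>i. s * y i) \<le> s * (\<tau> y + \<epsilon> / s)" using tau_le suppscale y by blast
    also have "\<dots> = s * \<tau> y + \<epsilon>" using s by (simp add: field_simps)
    finally show "\<tau> (\<lambda>i. s * y i) \<le> s * \<tau> y + \<epsilon>" .
  qed
  have hom: "\<tau> (\<lambda>i. s * y i) = s * \<tau> y" if y: "supp_in I y" for y s
  proof -
    have pos: "\<tau> (\<lambda>i. s * y i) = s * \<tau> y" if "s > 0" for s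
    proof -
      have "\<tau> (\<lambda>i. (1/s) * (s * y i)) \<le> (1/s) * \<tau> (\<lambda>i. s * y i)"
        by (rule hom_pos[OF suppscale[OF y]]) (use that in simp)
      moreover have "(\<lambda>i. (1/s) * (s * y i)) = y" using that by auto
      ultimately have "s * \<tau> y \<le> \<tau> (\<lambda>i. s * y i)" using that by (simp add: field_simps)
      with hom_pos[OF y that] show ?thesis by simp
    qed
    consider "s > 0" | "s = 0" | "s < 0" by linarith
    then show ?thesis
    proof cases
      case 1 then show ?thesis using pos by simp
    next
      case 2 then show ?thesis using tau0 by simp
    next
      case 3
      have "\<tau> (\<lambda>i. s * y i) = \<tau> (\<lambda>i. - ((- s) * y i))" by simp
      also have "\<dots> = - \<tau> (\<lambda>i. (- s) * y i)" using odd suppscale y by blast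
      also have "\<dots> = s * \<tau> y" using pos[of "-s"] 3 by simp
      finally show ?thesis .
    qed
  qed
  define ee where "ee = (\<lambda>i::'c. \<lambda>k::'c. if k = i then 1 else (0::real))"
  have rep: "F \<subseteq> I \<Longrightarrow> \<tau> (\<lambda>k. \<Sum>i\<in>F. y i * ee i k) = (\<Sum>i\<in>F. y i * \<tau> (ee i))" for F y
  proof (induction F rule: infinite_finite_induct)
    case (infinite F)
    then show ?case using finite_subset[OF _ finI] by blast
  next
    case empty
    then show ?case using tau0 by simp
  next
    case (insert i F)
    have s1: "supp_in I (\<lambda>k. y i * ee i k)" using insert by (auto simp: supp_in_def ee_def)
    have s2: "supp_in I (\<lambda>k. \<Sum>i\<in>F. y i * ee i k)" using insert
      by (auto simp: supp_in_def ee_def intro!: sum.neutral)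
    have "\<tau> (\<lambda>k. \<Sum>i\<in>insert i F. y i * ee i k) = \<tau> (\<lambda>k. y i * ee i k + (\<Sum>i\<in>F. y i * ee i k))"
      using insert by simp
    also have "\<dots> = \<tau> (\<lambda>k. y i * ee i k) + \<tau> (\<lambda>k. \<Sum>i\<in>F. y i * ee i k)"
      using addt s1 s2 by blast
    also have "\<tau> (\<lambda>k. y i * ee i k) = y i * \<tau> (ee i)"
      using hom[of "ee i" "y i"] insert by (auto simp: supp_in_def ee_def)
    finally show ?case using insert by simp
  qed
  have repI: "\<tau> y = (\<Sum>i\<in>I. y i * \<tau> (ee i))" if y: "supp_in I y" for y
  proof -
    have "(\<lambda>k. \<Sum>i\<in>I. y i * ee i k) = y"
    proof
      fix k
      have "(\<Sum>i\<in>I. y i * ee i k) = (\<Sum>i\<in>I. if k = i then y i else 0)"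
        by (intro sum.cong) (auto simp: ee_def)
      then show "(\<Sum>i\<in>I. y i * ee i k) = y k"
        using y finI by (cases "k \<in> I") (auto simp: supp_in_def)
    qed
    with rep[of I y] show ?thesis by simp
  qed
  define a where "a = (\<lambda>i. if i = j then - \<sigma> else \<tau> (ee i))"
  show ?thesis
  proof (intro exI conjI)
    show "\<exists>i\<in>insert j I. a i \<noteq> 0" using sig(1) by (auto simp: a_def)
    show "\<forall>x\<in>D. (\<Sum>i\<in>insert j I. a i * x i) \<le> 0"
    proof
      fix x assume xD: "x \<in> D"
      define y where "y = (\<lambda>i. if i = j then 0 else x i)"
      have ys: "supp_in I y" using Dsupp xD by (auto simp: y_def supp_in_def)
      have "(\<lambda>i. y i + (\<sigma> * x j) * u i) = x"
        using sig(1) by (auto simp: y_def u_def e_def)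
      then have "\<sigma> * x j \<in> T y" using xD by (simp add: T_def)
      then have le: "\<tau> y \<le> \<sigma> * x j" using tau_le ys by blast
      have "(\<Sum>i\<in>insert j I. a i * x i) = - \<sigma> * x j + (\<Sum>i\<in>I. a i * x i)"
        using jI finI by (simp add: a_def)
      also have "(\<Sum>i\<in>I. a i * x i) = (\<Sum>i\<in>I. y i * \<tau> (ee i))"
        using jI by (intro sum.cong) (auto simp: a_def y_def)
      also have "\<dots> = \<tau> y" using repI ys by simp
      finally show "(\<Sum>i\<in>insert j I. a i * x i) \<le> 0" using le by simp
    qed
  qed
qed

lemma cone_halfspace:
  fixes I :: "'c set"
  assumes "finite I"
  shows "\<And>D. \<forall>x\<in>D. supp_in I x \<Longrightarrow> \<forall>x\<in>D. \<forall>y\<in>D. (\<lambda>i. x i + y i) \<in> D \<Longrightarrow>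
    \<forall>x\<in>D. \<forall>s\<ge>0. (\<lambda>i. s * x i) \<in> D \<Longrightarrow>
    \<forall>x. supp_in I x \<longrightarrow> x \<in> D \<or> (\<lambda>i. - x i) \<in> D \<Longrightarrow>
    \<exists>x. supp_in I x \<and> x \<notin> D \<Longrightarrow>
    \<exists>a. (\<exists>i\<in>I. a i \<noteq> 0) \<and> (\<forall>x\<in>D. (\<Sum>i\<in>I. a i * x i) \<le> 0)"
  using assms
proof (induction I rule: finite_induct)
  case (empty D)
  have "(\<lambda>i. 0) \<in> D" using empty(4) by (auto simp: supp_in_def)
  moreover obtain x where "supp_in {} x" "x \<notin> D" using empty(5) by blast
  moreover have "x = (\<lambda>i. 0)" using \<open>supp_in {} x\<close> by (auto simp: supp_in_def)
  ultimately show ?case by simp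
next
  case (insert j I D)
  define e :: "'c \<Rightarrow> real" where "e = (\<lambda>i. if i = j then 1 else 0)"
  define E where "E = {y. supp_in I y \<and> (\<exists>t. (\<lambda>i. y i + t * e i) \<in> D)}"
  show ?case
  proof (cases "\<exists>y. supp_in I y \<and> y \<notin> E")
    case False
    then have "\<forall>y. supp_in I y \<longrightarrow> (\<exists>t. (\<lambda>i. y i + t * (if i = j then 1 else 0)) \<in> D)"
      by (auto simp: E_def e_def)
    then show ?thesis
      using cone_caseB[OF insert(2) insert(1) insert(4) insert(5) insert(6) insert(7) insert(8)] by blast
  next
    case True
    have E1: "\<forall>x\<in>E. supp_in I x" by (auto simp: E_def)
    have E2: "\<forall>x\<in>E. \<forall>y\<in>E. (\<lambda>i. x i + y i) \<in> E"
    proof (intro ballI)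
      fix x y assume "x \<in> E" "y \<in> E"
      then obtain t1 t2 where t: "(\<lambda>i. x i + t1 * e i) \<in> D" "(\<lambda>i. y i + t2 * e i) \<in> D"
        and s: "supp_in I x" "supp_in I y" by (auto simp: E_def)
      have "(\<lambda>i. (x i + t1 * e i) + (y i + t2 * e i)) \<in> D" using insert(5)[rule_format, OF t(1) t(2)] by simp
      moreover have "(\<lambda>i. (x i + t1 * e i) + (y i + t2 * e i)) = (\<lambda>i. (x i + y i) + (t1 + t2) * e i)"
        by (simp add: fun_eq_iff algebra_simps)
      ultimately show "(\<lambda>i. x i + y i) \<in> E" using s by (auto simp: E_def supp_in_def)
    qed
    have E3: "\<forall>x\<in>E. \<forall>s\<ge>0. (\<lambda>i. s * x i) \<in> E"
    proof (intro ballI allI impI)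
      fix x and s :: real assume "x \<in> E" "s \<ge> 0"
      then obtain t where t: "(\<lambda>i. x i + t * e i) \<in> D" and sx: "supp_in I x" by (auto simp: E_def)
      have "(\<lambda>i. s * (x i + t * e i)) \<in> D" using insert(6)[rule_format, OF t \<open>s \<ge> 0\<close>] by simp
      moreover have "(\<lambda>i. s * (x i + t * e i)) = (\<lambda>i. s * x i + (s * t) * e i)"
        by (simp add: fun_eq_iff algebra_simps)
      ultimately show "(\<lambda>i. s * x i) \<in> E" using sx by (auto simp: E_def supp_in_def)
    qed
    have E4: "\<forall>x. supp_in I x \<longrightarrow> x \<in> E \<or> (\<lambda>i. - x i) \<in> E"
    proof (intro allI impI)
      fix x assume sx: "supp_in I x"
      then have "supp_in (insert j I) x" by (auto simp: supp_in_def)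
      then have "x \<in> D \<or> (\<lambda>i. - x i) \<in> D" using insert(7) by blast
      then show "x \<in> E \<or> (\<lambda>i. - x i) \<in> E"
      proof
        assume "x \<in> D"
        then have "(\<lambda>i. x i + 0 * e i) \<in> D" by simp
        then have "x \<in> E" using sx unfolding E_def mem_Collect_eq by (intro conjI exI)
        then show ?thesis ..
      next
        assume "(\<lambda>i. - x i) \<in> D"
        then have "(\<lambda>i. - x i + 0 * e i) \<in> D" by simp
        moreover have "supp_in I (\<lambda>i. - x i)" using sx by (auto simp: supp_in_def)
        ultimately have "(\<lambda>i. - x i) \<in> E" unfolding E_def mem_Collect_eq by (intro conjI exI)
        then show ?thesis ..
      qed
    qed
    obtain a where a: "\<exists>i\<in>I. a i \<noteq> 0" "\<forall>x\<in>E. (\<Sum>i\<in>I. a i * x i) \<le> 0"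
      using insert(3)[OF E1 E2 E3 E4 True] by blast
    define a' where "a' = a(j := 0)"
    show ?thesis
    proof (intro exI conjI)
      show "\<exists>i\<in>insert j I. a' i \<noteq> 0" using a(1) insert(2) by (auto simp: a'_def)
      show "\<forall>x\<in>D. (\<Sum>i\<in>insert j I. a' i * x i) \<le> 0"
      proof
        fix x assume xD: "x \<in> D"
        define y where "y = (\<lambda>i. if i = j then 0 else x i)"
        have "(\<lambda>i. y i + x j * e i) = x" by (auto simp: y_def e_def fun_eq_iff)
        moreover have "supp_in I y" using insert(4) xD by (auto simp: y_def supp_in_def)
        ultimately have "y \<in> E" using xD unfolding E_def mem_Collect_eq by (intro conjI exI[of _ "x j"]) simp_all
        then have "(\<Sum>i\<in>I. a i * y i) \<le> 0" using a(2) by blast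
        moreover have "(\<Sum>i\<in>insert j I. a' i * x i) = (\<Sum>i\<in>I. a i * y i)"
          using insert(1,2) by (auto simp: a'_def y_def intro!: sum.cong)
        ultimately show "(\<Sum>i\<in>insert j I. a' i * x i) \<le> 0" by simp
      qed
    qed
  qed
qed

lemma kernel_exists:
  fixes I :: "'c set"
  assumes "finite I"
  shows "\<And>(X::'a set) (h::'c \<Rightarrow> 'a \<Rightarrow> real). finite X \<Longrightarrow> card I < card X \<Longrightarrow>
    \<exists>\<beta>. (\<exists>x\<in>X. \<beta> x \<noteq> 0) \<and> (\<forall>i\<in>I. (\<Sum>x\<in>X. \<beta> x * h i x) = 0)"
  using assms
proof (induction I rule: finite_induct)
  case (empty X h)
  then have "X \<noteq> {}" by auto
  then show ?case by (intro exI[of _ "\<lambda>_. 1"]) auto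
next
  case (insert i0 I X h)
  have cX: "card I + 1 < card X" using insert by simp
  show ?case
  proof (cases "\<forall>x\<in>X. h i0 x = 0")
    case True
    obtain \<beta> where b: "\<exists>x\<in>X. \<beta> x \<noteq> 0" "\<forall>i\<in>I. (\<Sum>x\<in>X. \<beta> x * h i x) = 0"
      using insert(3)[OF insert(4), of h] cX by auto
    show ?thesis using b True by (intro exI[of _ \<beta>]) auto
  next
    case False
    then obtain x0 where x0: "x0 \<in> X" "h i0 x0 \<noteq> 0" by blast
    define X' where "X' = X - {x0}"
    have fX': "finite X'" using insert(4) by (simp add: X'_def)
    have cX': "card I < card X'" using cX x0 insert(4) by (simp add: X'_def)
    define h' where "h' = (\<lambda>i x. h i x - h i x0 * h i0 x / h i0 x0)"
    obtain \<beta>' where b: "\<exists>x\<in>X'. \<beta>' x \<noteq> 0" "\<forall>i\<in>I. (\<Sum>x\<in>X'. \<beta>' x * h' i x) = 0"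
      using insert(3)[OF fX' cX', of h'] by auto
    define c where "c = - (\<Sum>x\<in>X'. \<beta>' x * h i0 x) / h i0 x0"
    define \<beta> where "\<beta> = \<beta>'(x0 := c)"
    have x0X': "x0 \<notin> X'" by (simp add: X'_def)
    have split: "(\<Sum>x\<in>X. \<beta> x * h i x) = c * h i x0 + (\<Sum>x\<in>X'. \<beta>' x * h i x)" for i
    proof -
      have "X = insert x0 X'" using x0 by (auto simp: X'_def)
      then have "(\<Sum>x\<in>X. \<beta> x * h i x) = \<beta> x0 * h i x0 + (\<Sum>x\<in>X'. \<beta> x * h i x)"
        using fX' x0X' by simp
      also have "(\<Sum>x\<in>X'. \<beta> x * h i x) = (\<Sum>x\<in>X'. \<beta>' x * h i x)"
        using x0X' by (intro sum.cong) (auto simp: \<beta>_def)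
      finally show ?thesis by (simp add: \<beta>_def)
    qed
    show ?thesis
    proof (intro exI[of _ \<beta>] conjI ballI)
      show "\<exists>x\<in>X. \<beta> x \<noteq> 0" using b(1) x0X' by (auto simp: \<beta>_def X'_def)
    next
      fix i assume i: "i \<in> insert i0 I"
      show "(\<Sum>x\<in>X. \<beta> x * h i x) = 0"
      proof (cases "i = i0")
        case True
        then show ?thesis using split[of i0] x0 by (simp add: c_def)
      next
        case False
        then have iI: "i \<in> I" using i by simp
        have "0 = (\<Sum>x\<in>X'. \<beta>' x * h' i x)" using b(2) iI by simp
        also have "\<dots> = (\<Sum>x\<in>X'. \<beta>' x * h i x) - (h i x0 / h i0 x0) * (\<Sum>x\<in>X'. \<beta>' x * h i0 x)"
          by (simp add: h'_def sum_subtractf sum_distrib_left algebra_simps)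
        also have "\<dots> = (\<Sum>x\<in>X'. \<beta>' x * h i x) + c * h i x0"
          using x0 by (simp add: c_def field_simps)
        finally show ?thesis using split[of i] by simp
      qed
    qed
  qed
qed

lemma cara_reduce:
  fixes I :: "'c set" and g :: "'c \<Rightarrow> 'a \<Rightarrow> real"
  assumes finI: "finite I"
  shows "finite X \<Longrightarrow> (\<forall>x\<in>X. 0 \<le> \<alpha> x) \<Longrightarrow>
    \<exists>Y \<alpha>'. Y \<subseteq> X \<and> card Y \<le> card I + 1 \<and> (\<forall>x\<in>Y. 0 \<le> \<alpha>' x) \<and> sum \<alpha>' Y = sum \<alpha> X \<and>
      (\<forall>i\<in>I. (\<Sum>x\<in>Y. \<alpha>' x * g i x) = (\<Sum>x\<in>X. \<alpha> x * g i x))"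
proof (induction "card X" arbitrary: X \<alpha> rule: less_induct)
  case (less X \<alpha>)
  show ?case
  proof (cases "card X \<le> card I + 1")
    case True
    then show ?thesis using less by blast
  next
    case False
    define I' where "I' = insert None (Some ` I)"
    define h where "h = (\<lambda>i x. case i of None \<Rightarrow> 1 | Some j \<Rightarrow> g j x)"
    have cI': "card I' = card I + 1"
      using finI by (simp add: I'_def card_image)
    have fI': "finite I'" by (simp add: I'_def finI)
    have cc: "card I' < card X" using False cI' by simp
    obtain \<beta> where b: "\<exists>x\<in>X. \<beta> x \<noteq> 0" "\<forall>i\<in>I'. (\<Sum>x\<in>X. \<beta> x * h i x) = 0"
      using kernel_exists[OF fI' less(2) cc] by blast
    have "None \<in> I'" by (simp add: I'_def)
    then have sb: "(\<Sum>x\<in>X. \<beta> x) = 0" using b(2)[rule_format, of None] by (simp add: h_def)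
    have sg: "(\<Sum>x\<in>X. \<beta> x * g i x) = 0" if "i \<in> I" for i
    proof -
      have "Some i \<in> I'" using that by (simp add: I'_def)
      then show ?thesis using b(2)[rule_format, of "Some i"] by (simp add: h_def)
    qed
    define P where "P = {x\<in>X. \<beta> x > 0}"
    have "P \<noteq> {}"
    proof
      assume "P = {}"
      then have nn: "\<And>x. x \<in> X \<Longrightarrow> 0 \<le> - \<beta> x" by (auto simp: P_def)
      have "(\<Sum>x\<in>X. - \<beta> x) = 0" using sb by (simp add: sum_negf)
      then have "\<forall>x\<in>X. - \<beta> x = 0" using sum_nonneg_eq_0_iff[OF less(2) nn] by simp
      then show False using b(1) by auto
    qed
    have fP: "finite P" using less(2) by (simp add: P_def)
    define t where "t = Min ((\<lambda>x. \<alpha> x / \<beta> x) ` P)"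
    have "t \<in> (\<lambda>x. \<alpha> x / \<beta> x) ` P" unfolding t_def using fP \<open>P \<noteq> {}\<close> by (intro Min_in) auto
    then obtain x1 where x1: "x1 \<in> P" "t = \<alpha> x1 / \<beta> x1" by blast
    have tle: "t \<le> \<alpha> x / \<beta> x" if "x \<in> P" for x
      unfolding t_def using fP that by (intro Min_le) auto
    have x1b: "\<beta> x1 > 0" "x1 \<in> X" using x1(1) by (auto simp: P_def)
    have "\<alpha> x1 \<ge> 0" using less(3) x1b by blast
    then have t0: "t \<ge> 0" using x1b by (simp add: x1(2))
    define \<alpha>1 where "\<alpha>1 = (\<lambda>x. \<alpha> x - t * \<beta> x)"
    have a1: "\<forall>x\<in>X. 0 \<le> \<alpha>1 x"
    proof
      fix x assume x: "x \<in> X"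
      show "0 \<le> \<alpha>1 x"
      proof (cases "\<beta> x > 0")
        case True
        then have "t \<le> \<alpha> x / \<beta> x" using tle x by (auto simp: P_def)
        then have "t * \<beta> x \<le> \<alpha> x" using True by (simp add: field_simps)
        then show ?thesis by (simp add: \<alpha>1_def)
      next
        case False
        then have "t * \<beta> x \<le> 0" using t0 by (simp add: mult_nonneg_nonpos)
        moreover have "0 \<le> \<alpha> x" using less(3) x by blast
        ultimately show ?thesis by (simp add: \<alpha>1_def)
      qed
    qed
    have a1x1: "\<alpha>1 x1 = 0" using x1b by (simp add: \<alpha>1_def x1(2))
    define X' where "X' = X - {x1}"
    have x1X: "x1 \<in> X" using x1b by simp
    have cX': "card X' < card X" unfolding X'_def using x1X less(2) by (rule card_Diff1_less[rotated])
    have fX': "finite X'" using less(2) by (simp add: X'_def)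
    obtain Y \<alpha>' where Y: "Y \<subseteq> X'" "card Y \<le> card I + 1" "\<forall>x\<in>Y. 0 \<le> \<alpha>' x"
      "sum \<alpha>' Y = sum \<alpha>1 X'" "\<forall>i\<in>I. (\<Sum>x\<in>Y. \<alpha>' x * g i x) = (\<Sum>x\<in>X'. \<alpha>1 x * g i x)"
      using less(1)[OF cX' fX', of \<alpha>1] a1 unfolding X'_def by blast
    have XX: "X = insert x1 X'" using x1X by (auto simp: X'_def)
    have x1n: "x1 \<notin> X'" by (simp add: X'_def)
    have sumX: "sum f X = f x1 + sum f X'" for f :: "'a \<Rightarrow> real"
      using XX fX' x1n by (metis sum.insert)
    have "sum \<alpha>1 X' = sum \<alpha>1 X" using sumX[of \<alpha>1] a1x1 by simp
    also have "\<dots> = sum \<alpha> X - t * (\<Sum>x\<in>X. \<beta> x)" by (simp add: \<alpha>1_def sum_subtractf sum_distrib_left)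
    also have "\<dots> = sum \<alpha> X" using sb by simp
    finally have s1: "sum \<alpha>1 X' = sum \<alpha> X" .
    have s2: "(\<Sum>x\<in>X'. \<alpha>1 x * g i x) = (\<Sum>x\<in>X. \<alpha> x * g i x)" if "i \<in> I" for i
    proof -
      have "(\<Sum>x\<in>X'. \<alpha>1 x * g i x) = (\<Sum>x\<in>X. \<alpha>1 x * g i x)" using sumX[of "\<lambda>x. \<alpha>1 x * g i x"] a1x1 by simp
      also have "\<dots> = (\<Sum>x\<in>X. \<alpha> x * g i x) - t * (\<Sum>x\<in>X. \<beta> x * g i x)"
        by (simp add: \<alpha>1_def sum_subtractf sum_distrib_left algebra_simps)
      also have "\<dots> = (\<Sum>x\<in>X. \<alpha> x * g i x)" using sg that by simp
      finally show ?thesis .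
    qed
    have "Y \<subseteq> X" using Y(1) by (auto simp: X'_def)
    then show ?thesis
      using Y(2-5) s1 s2 by (intro exI[of _ Y] exI[of _ \<alpha>']) simp
  qed
qed

definition in_hull :: "'a set \<Rightarrow> ('c \<Rightarrow> 'a \<Rightarrow> real) \<Rightarrow> 'c set \<Rightarrow> ('c \<Rightarrow> real) \<Rightarrow> bool" where
  "in_hull S g I v \<longleftrightarrow> (\<exists>X \<alpha>. finite X \<and> X \<subseteq> S \<and> (\<forall>x\<in>X. 0 \<le> \<alpha> x) \<and> sum \<alpha> X = 1 \<and>
      (\<forall>i\<in>I. (\<Sum>x\<in>X. \<alpha> x * g i x) = v i))"

lemma in_hull_cong: "in_hull S g I c \<Longrightarrow> (\<forall>i\<in>I. c i = c' i) \<Longrightarrow> in_hull S g I c'"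
  unfolding in_hull_def by metis

lemma in_hull_point: "x \<in> S \<Longrightarrow> in_hull S g I (\<lambda>i. g i x)"
  unfolding in_hull_def by (intro exI[of _ "{x}"] exI[of _ "\<lambda>_. 1"]) auto

lemma in_hull_sums: "finite X \<Longrightarrow> X \<subseteq> S \<Longrightarrow> (\<forall>x\<in>X. 0 \<le> \<alpha> x) \<Longrightarrow> sum \<alpha> X = 1 \<Longrightarrow>
  in_hull S g I (\<lambda>i. \<Sum>x\<in>X. \<alpha> x * g i x)"
  unfolding in_hull_def by blast

lemma in_hull_convex:
  assumes h1: "in_hull S g I c1" and h2: "in_hull S g I c2" and l: "0 \<le> l" "l \<le> 1"
  shows "in_hull S g I (\<lambda>i. l * c1 i + (1 - l) * c2 i)"
proof -
  obtain X1 \<alpha>1 where X1: "finite X1" "X1 \<subseteq> S" "\<forall>x\<in>X1. 0 \<le> \<alpha>1 x" "sum \<alpha>1 X1 = 1"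
    "\<forall>i\<in>I. (\<Sum>x\<in>X1. \<alpha>1 x * g i x) = c1 i" using h1 unfolding in_hull_def by blast
  obtain X2 \<alpha>2 where X2: "finite X2" "X2 \<subseteq> S" "\<forall>x\<in>X2. 0 \<le> \<alpha>2 x" "sum \<alpha>2 X2 = 1"
    "\<forall>i\<in>I. (\<Sum>x\<in>X2. \<alpha>2 x * g i x) = c2 i" using h2 unfolding in_hull_def by blast
  define X where "X = X1 \<union> X2"
  define \<alpha> where "\<alpha> = (\<lambda>x. (if x \<in> X1 then l * \<alpha>1 x else 0) + (if x \<in> X2 then (1 - l) * \<alpha>2 x else 0))"
  have fX: "finite X" using X1 X2 by (simp add: X_def)
  have r1: "(\<Sum>x\<in>X. (if x \<in> X1 then f x else 0)) = sum f X1" for f :: "'a \<Rightarrow> real"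
  proof -
    have "sum f (X \<inter> X1) = (\<Sum>x\<in>X. (if x \<in> X1 then f x else 0))" using sum.inter_restrict[OF fX] by simp
    moreover have "X \<inter> X1 = X1" by (auto simp: X_def)
    ultimately show ?thesis by simp
  qed
  have r2: "(\<Sum>x\<in>X. (if x \<in> X2 then f x else 0)) = sum f X2" for f :: "'a \<Rightarrow> real"
  proof -
    have "sum f (X \<inter> X2) = (\<Sum>x\<in>X. (if x \<in> X2 then f x else 0))" using sum.inter_restrict[OF fX] by simp
    moreover have "X \<inter> X2 = X2" by (auto simp: X_def)
    ultimately show ?thesis by simp
  qed
  have gen: "(\<Sum>x\<in>X. \<alpha> x * f x) = l * (\<Sum>x\<in>X1. \<alpha>1 x * f x) + (1 - l) * (\<Sum>x\<in>X2. \<alpha>2 x * f x)"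
    for f :: "'a \<Rightarrow> real"
  proof -
    have "(\<Sum>x\<in>X. \<alpha> x * f x) = (\<Sum>x\<in>X. (if x \<in> X1 then l * \<alpha>1 x * f x else 0))
        + (\<Sum>x\<in>X. (if x \<in> X2 then (1 - l) * \<alpha>2 x * f x else 0))"
      unfolding sum.distrib[symmetric] by (intro sum.cong) (auto simp: \<alpha>_def algebra_simps)
    also have "\<dots> = (\<Sum>x\<in>X1. l * \<alpha>1 x * f x) + (\<Sum>x\<in>X2. (1 - l) * \<alpha>2 x * f x)"
      using r1 r2 by simp
    finally show ?thesis by (simp add: sum_distrib_left algebra_simps)
  qed
  show ?thesis unfolding in_hull_def
  proof (intro exI[of _ X] exI[of _ \<alpha>] conjI ballI)
    show "finite X" by (rule fX)
    show "X \<subseteq> S" using X1 X2 by (auto simp: X_def)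
    fix x assume "x \<in> X"
    show "0 \<le> \<alpha> x" using X1(3) X2(3) l unfolding \<alpha>_def by (auto intro!: add_nonneg_nonneg)
  next
    show "sum \<alpha> X = 1" using gen[of "\<lambda>_. 1"] X1(4) X2(4) by simp
  next
    fix i assume "i \<in> I"
    then show "(\<Sum>x\<in>X. \<alpha> x * g i x) = l * c1 i + (1 - l) * c2 i"
      using gen[of "g i"] X1(5) X2(5) by simp
  qed
qed

lemma richter:
  fixes \<mu> :: "'a measure" and g :: "'c \<Rightarrow> 'a \<Rightarrow> real"
  assumes P: "prob_space \<mu>"
  shows "finite I \<Longrightarrow> (\<forall>i\<in>I. integrable \<mu> (g i)) \<Longrightarrow> (AE x in \<mu>. x \<in> S) \<Longrightarrow>
    in_hull S g I (\<lambda>i. \<integral>x. g i x \<partial>\<mu>)"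
proof (induction "card I" arbitrary: I S g rule: less_induct)
  case (less I S g)
  interpret prob_space \<mu> by (rule P)
  note finI = less(2) and intg = less(3) and AES = less(4)
  define v where "v = (\<lambda>i. \<integral>x. g i x \<partial>\<mu>)"
  have "S \<noteq> {}"
  proof
    assume "S = {}"
    then have "AE x in \<mu>. False" using AES by simp
    then show False using AE_False by simp
  qed
  then obtain x0 where x0: "x0 \<in> S" by blast
  show ?case
  proof (rule ccontr)
    assume nh: "\<not> in_hull S g I (\<lambda>i. \<integral>x. g i x \<partial>\<mu>)"
    then have nhv: "\<not> in_hull S g I v" by (simp add: v_def)
    have Ine: "I \<noteq> {}"
    proof
      assume "I = {}"
      then have "in_hull S g I v" using in_hull_point[OF x0, of g I] in_hull_cong by blast
      with nhv show False by simp
    qed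
    define D where "D = {z. \<exists>c s. in_hull S g I c \<and> 0 \<le> s \<and> z = (\<lambda>i. if i \<in> I then s * (c i - v i) else 0)}"
    have D1: "\<forall>x\<in>D. supp_in I x" by (auto simp: D_def supp_in_def)
    have D2: "\<forall>x\<in>D. \<forall>y\<in>D. (\<lambda>i. x i + y i) \<in> D"
    proof (intro ballI)
      fix z1 z2 assume "z1 \<in> D" "z2 \<in> D"
      then obtain c1 s1 c2 s2 where c: "in_hull S g I c1" "0 \<le> s1" "z1 = (\<lambda>i. if i \<in> I then s1 * (c1 i - v i) else 0)"
        "in_hull S g I c2" "0 \<le> s2" "z2 = (\<lambda>i. if i \<in> I then s2 * (c2 i - v i) else 0)"
        unfolding D_def by blast
      show "(\<lambda>i. z1 i + z2 i) \<in> D"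
      proof (cases "s1 + s2 = 0")
        case True
        then have "s1 = 0" "s2 = 0" using c by auto
        then have "(\<lambda>i. z1 i + z2 i) = (\<lambda>i. if i \<in> I then 0 * (c1 i - v i) else 0)"
          using c by (auto simp: fun_eq_iff)
        then show ?thesis using c(1) unfolding D_def by (intro CollectI exI[of _ c1] exI[of _ 0]) simp
      next
        case False
        then have sp: "s1 + s2 > 0" using c by auto
        define l where "l = s1 / (s1 + s2)"
        have l: "0 \<le> l" "l \<le> 1" using c sp by (auto simp: l_def)
        have h: "in_hull S g I (\<lambda>i. l * c1 i + (1 - l) * c2 i)" by (rule in_hull_convex[OF c(1) c(4) l])
        have k1: "(s1 + s2) * l = s1" and k2: "(s1 + s2) * (1 - l) = s2" using sp by (simp_all add: l_def field_simps)
        have eq: "(s1 + s2) * (l * x + (1 - l) * y - z) = s1 * (x - z) + s2 * (y - z)" for x y z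
        proof -
          have "(s1 + s2) * (l * x + (1 - l) * y - z) = ((s1 + s2) * l) * x + ((s1 + s2) * (1 - l)) * y - (s1 + s2) * z"
            by (simp add: algebra_simps)
          also have "\<dots> = s1 * (x - z) + s2 * (y - z)" unfolding k1 k2 by (simp add: algebra_simps)
          finally show ?thesis .
        qed
        have "(\<lambda>i. z1 i + z2 i) = (\<lambda>i. if i \<in> I then (s1 + s2) * ((l * c1 i + (1 - l) * c2 i) - v i) else 0)"
          by (auto simp: fun_eq_iff c(3) c(6) eq)
        then show ?thesis using h sp unfolding D_def
          by (intro CollectI exI[of _ "\<lambda>i. l * c1 i + (1 - l) * c2 i"] exI[of _ "s1 + s2"]) auto
      qed
    qed
    have D3: "\<forall>x\<in>D. \<forall>s\<ge>0. (\<lambda>i. s * x i) \<in> D"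
    proof (intro ballI allI impI)
      fix z and s :: real assume "z \<in> D" "0 \<le> s"
      then obtain c s1 where c: "in_hull S g I c" "0 \<le> s1" "z = (\<lambda>i. if i \<in> I then s1 * (c i - v i) else 0)"
        unfolding D_def by blast
      have "(\<lambda>i. s * z i) = (\<lambda>i. if i \<in> I then (s * s1) * (c i - v i) else 0)"
        by (auto simp: c(3) fun_eq_iff)
      moreover have "0 \<le> s * s1" using c(2) \<open>0 \<le> s\<close> by simp
      ultimately show "(\<lambda>i. s * z i) \<in> D" using c(1) unfolding D_def by (intro CollectI exI[of _ c] exI[of _ "s * s1"]) simp
    qed
    have D4: "\<forall>w. supp_in I w \<longrightarrow> w \<in> D \<or> (\<lambda>i. - w i) \<in> D"
    proof (intro allI impI)
      fix w assume sw: "supp_in I w"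
      show "w \<in> D \<or> (\<lambda>i. - w i) \<in> D"
      proof (cases "\<forall>i\<in>I. w i = 0")
        case True
        then have "w = (\<lambda>i. if i \<in> I then 0 * ((\<lambda>i. g i x0) i - v i) else 0)"
          using sw by (auto simp: fun_eq_iff supp_in_def)
        then have "w \<in> D" unfolding D_def using in_hull_point[OF x0, of g I] by (intro CollectI exI[of _ "\<lambda>i. g i x0"] exI[of _ 0]) simp
        then show ?thesis ..
      next
        case False
        then obtain j where j: "j \<in> I" "w j \<noteq> 0" by blast
        define h where "h = (\<lambda>i x. g i x - (w i / w j) * g j x)"
        have cI: "card (I - {j}) < card I" using j finI by (intro card_Diff1_less) auto
        have ih: "in_hull S h (I - {j}) (\<lambda>i. \<integral>x. h i x \<partial>\<mu>)"
          using less(1)[OF cI] finI intg AES j by (auto simp: h_def)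
        then obtain X \<alpha> where X: "finite X" "X \<subseteq> S" "\<forall>x\<in>X. 0 \<le> \<alpha> x" "sum \<alpha> X = 1"
          "\<forall>i\<in>I - {j}. (\<Sum>x\<in>X. \<alpha> x * h i x) = (\<integral>x. h i x \<partial>\<mu>)" unfolding in_hull_def by blast
        define c where "c = (\<lambda>i. \<Sum>x\<in>X. \<alpha> x * g i x)"
        have hc: "in_hull S g I c" unfolding c_def by (rule in_hull_sums[OF X(1-4)])
        have rel: "c i - v i = (w i / w j) * (c j - v j)" if "i \<in> I" for i
        proof (cases "i = j")
          case True then show ?thesis using j by simp
        next
          case False
          then have "(\<Sum>x\<in>X. \<alpha> x * h i x) = (\<integral>x. h i x \<partial>\<mu>)" using X(5) that by simp
          moreover have "(\<Sum>x\<in>X. \<alpha> x * h i x) = c i - (w i / w j) * c j"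
            by (simp add: h_def c_def algebra_simps sum_subtractf sum_distrib_left)
          moreover have "(\<integral>x. h i x \<partial>\<mu>) = v i - (w i / w j) * v j"
            unfolding h_def v_def using intg that j by (simp add: integral_diff)
          ultimately have "c i - (w i / w j) * c j = v i - (w i / w j) * v j" by simp
          then show ?thesis unfolding right_diff_distrib by linarith
        qed
        define \<delta> where "\<delta> = c j - v j"
        have "\<delta> \<noteq> 0"
        proof
          assume "\<delta> = 0"
          then have "\<forall>i\<in>I. c i = v i" using rel by (simp add: \<delta>_def)
          then have "in_hull S g I v" using in_hull_cong[OF hc] by blast
          with nhv show False by simp
        qed
        show ?thesis
        proof (cases "w j / \<delta> > 0")
          case True
          have "w = (\<lambda>i. if i \<in> I then (w j / \<delta>) * (c i - v i) else 0)"
          proof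
            fix i show "w i = (if i \<in> I then (w j / \<delta>) * (c i - v i) else 0)"
              using sw rel[of i] \<open>\<delta> \<noteq> 0\<close> j by (auto simp: supp_in_def \<delta>_def field_simps)
          qed
          then have "w \<in> D" unfolding D_def using hc True by (intro CollectI exI[of _ c] exI[of _ "w j / \<delta>"]) auto
          then show ?thesis ..
        next
          case False
          then have neg: "- w j / \<delta> \<ge> 0" using \<open>\<delta> \<noteq> 0\<close> j
            by (smt (verit, del_insts) divide_minus_left)
          have "(\<lambda>i. - w i) = (\<lambda>i. if i \<in> I then (- w j / \<delta>) * (c i - v i) else 0)"
          proof
            fix i show "- w i = (if i \<in> I then (- w j / \<delta>) * (c i - v i) else 0)"
              using sw rel[of i] \<open>\<delta> \<noteq> 0\<close> j by (auto simp: supp_in_def \<delta>_def field_simps)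
          qed
          then have "(\<lambda>i. - w i) \<in> D" unfolding D_def using hc neg
            by (intro CollectI exI[of _ c] exI[of _ "- w j / \<delta>"]) auto
          then show ?thesis ..
        qed
      qed
    qed
    obtain j where j: "j \<in> I" using Ine by blast
    define e where "e = (\<lambda>i. if i = j then 1 else (0::real))"
    have D5: "\<exists>x. supp_in I x \<and> x \<notin> D"
    proof (rule ccontr)
      assume "\<not> ?thesis"
      then have all: "\<forall>x. supp_in I x \<longrightarrow> x \<in> D" by blast
      have "supp_in I e" "supp_in I (\<lambda>i. - e i)" using j by (auto simp: supp_in_def e_def)
      then have "e \<in> D" "(\<lambda>i. - e i) \<in> D" using all by auto
      then obtain c1 s1 c2 s2 where c: "in_hull S g I c1" "0 \<le> s1" "e = (\<lambda>i. if i \<in> I then s1 * (c1 i - v i) else 0)"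
        "in_hull S g I c2" "0 \<le> s2" "(\<lambda>i. - e i) = (\<lambda>i. if i \<in> I then s2 * (c2 i - v i) else 0)"
        unfolding D_def by blast
      have e1: "s1 * (c1 j - v j) = 1" using fun_cong[OF c(3), of j] j by (simp add: e_def)
      have e2: "s2 * (c2 j - v j) = - 1" using fun_cong[OF c(6), of j] j by (simp add: e_def)
      have s1p: "s1 > 0" using e1 c(2) by (cases "s1 = 0") auto
      have s2p: "s2 > 0" using e2 c(5) by (cases "s2 = 0") auto
      define l where "l = s1 / (s1 + s2)"
      have l: "0 \<le> l" "l \<le> 1" using s1p s2p by (auto simp: l_def)
      have h: "in_hull S g I (\<lambda>i. l * c1 i + (1 - l) * c2 i)" by (rule in_hull_convex[OF c(1) c(4) l])
      have "\<forall>i\<in>I. l * c1 i + (1 - l) * c2 i = v i"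
      proof
        fix i assume i: "i \<in> I"
        have "s1 * (c1 i - v i) + s2 * (c2 i - v i) = 0"
          using fun_cong[OF c(3), of i] fun_cong[OF c(6), of i] i by simp
        then have e0: "s1 * c1 i + s2 * c2 i = (s1 + s2) * v i" by (simp add: algebra_simps)
        have "l * c1 i + (1 - l) * c2 i = (s1 * c1 i + s2 * c2 i) / (s1 + s2)"
        proof -
          have ne: "s1 + s2 \<noteq> 0" using s1p s2p by simp
          have l1: "1 - l = s2 / (s1 + s2)" using ne unfolding l_def by (simp add: field_simps)
          have "s1 / (s1 + s2) * c1 i + s2 / (s1 + s2) * c2 i = (s1 * c1 i + s2 * c2 i) / (s1 + s2)"
            by (simp add: add_divide_distrib)
          then show ?thesis unfolding l1 by (simp add: l_def)
        qed
        also have "\<dots> = v i" unfolding e0 using s1p s2p by simp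
        finally show "l * c1 i + (1 - l) * c2 i = v i" .
      qed
      then have "in_hull S g I v" using in_hull_cong[OF h] by blast
      with nhv show False by simp
    qed
    obtain a where a: "\<exists>i\<in>I. a i \<noteq> 0" "\<forall>z\<in>D. (\<Sum>i\<in>I. a i * z i) \<le> 0"
      using cone_halfspace[OF finI D1 D2 D3 D4 D5] by blast
    obtain j0 where j0: "j0 \<in> I" "a j0 \<noteq> 0" using a(1) by blast
    define L where "L = (\<lambda>x. \<Sum>i\<in>I. a i * g i x)"
    define Lv where "Lv = (\<Sum>i\<in>I. a i * v i)"
    have Lle: "L x \<le> Lv" if "x \<in> S" for x
    proof -
      have "(\<lambda>i. if i \<in> I then 1 * (g i x - v i) else 0) \<in> D"
        unfolding D_def using in_hull_point[OF that, of g I] by (intro CollectI exI[of _ "\<lambda>i. g i x"] exI[of _ 1]) simp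
      from a(2)[rule_format, OF this] have "(\<Sum>i\<in>I. a i * (g i x - v i)) \<le> 0" by simp
      then show ?thesis by (simp add: L_def Lv_def algebra_simps sum_subtractf)
    qed
    have intL: "integrable \<mu> L" unfolding L_def using intg by auto
    have intLv: "(\<integral>x. L x \<partial>\<mu>) = Lv"
      unfolding L_def Lv_def v_def using intg by (simp add: integral_sum)
    have intf: "integrable \<mu> (\<lambda>x. Lv - L x)" using intL by auto
    have nnf: "AE x in \<mu>. 0 \<le> Lv - L x" using AES by eventually_elim (use Lle in auto)
    have "(\<integral>x. Lv - L x \<partial>\<mu>) = 0" using intL intLv by (simp add: prob_space)
    then have "AE x in \<mu>. Lv - L x = 0" using integral_nonneg_eq_0_iff_AE[OF intf nnf] by simp
    then have AES': "AE x in \<mu>. x \<in> {x \<in> S. L x = Lv}" using AES by eventually_elim auto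
    have cI: "card (I - {j0}) < card I" using j0 finI by (intro card_Diff1_less) auto
    have ih: "in_hull {x \<in> S. L x = Lv} g (I - {j0}) (\<lambda>i. \<integral>x. g i x \<partial>\<mu>)"
      using less(1)[OF cI] finI intg AES' by auto
    then obtain X \<alpha> where X: "finite X" "X \<subseteq> {x \<in> S. L x = Lv}" "\<forall>x\<in>X. 0 \<le> \<alpha> x" "sum \<alpha> X = 1"
      "\<forall>i\<in>I - {j0}. (\<Sum>x\<in>X. \<alpha> x * g i x) = v i" unfolding in_hull_def v_def by blast
    have "(\<Sum>x\<in>X. \<alpha> x * g j0 x) = v j0"
    proof -
      have Lsplit: "L x = a j0 * g j0 x + (\<Sum>i\<in>I - {j0}. a i * g i x)" for x
        unfolding L_def using finI j0 by (simp add: sum.remove)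
      have Lvsplit: "Lv = a j0 * v j0 + (\<Sum>i\<in>I - {j0}. a i * v i)"
        unfolding Lv_def using finI j0 by (simp add: sum.remove)
      have pt: "a j0 * g j0 x = Lv - (\<Sum>i\<in>I - {j0}. a i * g i x)" if "x \<in> X" for x
        using X(2) that Lsplit[of x] by auto
      have swp: "(\<Sum>x\<in>X. \<Sum>i\<in>I - {j0}. \<alpha> x * (a i * g i x)) = (\<Sum>i\<in>I - {j0}. a i * (\<Sum>x\<in>X. \<alpha> x * g i x))"
        by (subst sum.swap) (simp add: sum_distrib_left mult.left_commute)
      have "a j0 * (\<Sum>x\<in>X. \<alpha> x * g j0 x) = (\<Sum>x\<in>X. \<alpha> x * (a j0 * g j0 x))"
        by (simp add: sum_distrib_left algebra_simps)
      also have "\<dots> = (\<Sum>x\<in>X. \<alpha> x * (Lv - (\<Sum>i\<in>I - {j0}. a i * g i x)))"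
        using pt by (intro sum.cong) auto
      also have "\<dots> = (\<Sum>x\<in>X. Lv * \<alpha> x - (\<Sum>i\<in>I - {j0}. \<alpha> x * (a i * g i x)))"
        by (intro sum.cong) (simp_all add: right_diff_distrib sum_distrib_left mult.commute)
      also have "\<dots> = Lv * (\<Sum>x\<in>X. \<alpha> x) - (\<Sum>x\<in>X. \<Sum>i\<in>I - {j0}. \<alpha> x * (a i * g i x))"
        by (simp add: sum_subtractf sum_distrib_left)
      also have "\<dots> = Lv - (\<Sum>i\<in>I - {j0}. a i * v i)"
        using X(4) X(5) swp by simp
      also have "\<dots> = a j0 * v j0" using Lvsplit by simp
      finally show ?thesis using j0(2) by simp
    qed
    then have "\<forall>i\<in>I. (\<Sum>x\<in>X. \<alpha> x * g i x) = v i" using X(5) by auto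
    moreover have "X \<subseteq> S" using X(2) by auto
    ultimately have "in_hull S g I v" unfolding in_hull_def using X(1,3,4) by blast
    with nhv show False by simp
  qed
qed

definition orth_growth :: "(real^'n \<Rightarrow> real) \<Rightarrow> nat \<Rightarrow> bool" where
  "orth_growth h D \<longleftrightarrow> (\<exists>C\<ge>0. \<forall>x\<in>nonneg_orthant. \<bar>h x\<bar> \<le> C * (1 + norm x ^ D))"

lemma pow_le_1_plus:
  fixes r :: real
  assumes "k \<le> D" "0 \<le> r"
  shows "r ^ k \<le> 1 + r ^ D"
proof (cases "r \<le> 1")
  case True
  then have "r ^ k \<le> 1" using assms by (simp add: power_le_one)
  moreover have "0 \<le> r ^ D" using assms by simp
  ultimately show ?thesis by simp
next
  case False
  then have "r ^ k \<le> r ^ D" using assms by (intro power_increasing) auto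
  then show ?thesis by simp
qed

lemma poly_growth:
  fixes f :: "real^'n \<Rightarrow> real"
  assumes "is_poly_deg D f"
  shows "\<exists>C\<ge>0. \<forall>x. \<bar>f x\<bar> \<le> C * (1 + norm x ^ D)"
proof -
  define A where "A = {\<alpha>::'n\<Rightarrow>nat. sum \<alpha> UNIV \<le> D}"
  obtain c where f: "f = (\<lambda>x. \<Sum>\<alpha>\<in>A. c \<alpha> * (\<Prod>i\<in>UNIV. (x $ i) ^ \<alpha> i))"
    using assms unfolding is_poly_deg_def A_def by blast
  define C where "C = (\<Sum>\<alpha>\<in>A. \<bar>c \<alpha>\<bar>)"
  have C0: "C \<ge> 0" unfolding C_def by (simp add: sum_nonneg)
  have "\<bar>f x\<bar> \<le> C * (1 + norm x ^ D)" for x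
  proof -
    have P: "\<bar>\<Prod>i\<in>UNIV. (x $ i) ^ \<alpha> i\<bar> \<le> 1 + norm x ^ D" if "\<alpha> \<in> A" for \<alpha>
    proof -
      have "\<bar>\<Prod>i\<in>UNIV. (x $ i) ^ \<alpha> i\<bar> = (\<Prod>i\<in>UNIV. \<bar>x $ i\<bar> ^ \<alpha> i)"
        by (simp add: abs_prod power_abs)
      also have "\<dots> \<le> (\<Prod>i\<in>UNIV. norm x ^ \<alpha> i)"
        by (intro prod_mono conjI power_mono component_le_norm_cart) auto
      also have "\<dots> = norm x ^ (\<Sum>i\<in>UNIV. \<alpha> i)" by (simp add: power_sum)
      also have "\<dots> \<le> 1 + norm x ^ D" using that by (intro pow_le_1_plus) (auto simp: A_def)
      finally show ?thesis .
    qed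
    have "\<bar>f x\<bar> \<le> (\<Sum>\<alpha>\<in>A. \<bar>c \<alpha> * (\<Prod>i\<in>UNIV. (x $ i) ^ \<alpha> i)\<bar>)"
      unfolding f by (rule sum_abs)
    also have "\<dots> \<le> (\<Sum>\<alpha>\<in>A. \<bar>c \<alpha>\<bar> * (1 + norm x ^ D))"
      by (intro sum_mono) (auto simp: abs_mult intro!: mult_left_mono P)
    also have "\<dots> = C * (1 + norm x ^ D)" by (simp add: C_def sum_distrib_right)
    finally show ?thesis .
  qed
  then show ?thesis using C0 by blast
qed

lemma poly_cont:
  fixes f :: "real^'n \<Rightarrow> real"
  assumes "is_poly_deg D f"
  shows "continuous_on UNIV f"
proof -
  obtain c where f: "f = (\<lambda>x. \<Sum>\<alpha>\<in>{\<alpha>::'n\<Rightarrow>nat. sum \<alpha> UNIV \<le> D}. c \<alpha> * (\<Prod>i\<in>UNIV. (x $ i) ^ \<alpha> i))"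
    using assms unfolding is_poly_deg_def by blast
  show ?thesis unfolding f by (intro continuous_intros continuous_on_component continuous_on_id)
qed

lemma pw_growth:
  fixes \<phi> :: "real^'n \<Rightarrow> real"
  assumes "is_pw_poly_deg nonneg_orthant D \<phi>"
  shows "orth_growth \<phi> D"
proof -
  obtain P :: "((real ^ 'n) set \<times> (real ^ 'n \<Rightarrow> real)) set" where P: "finite P"
    "nonneg_orthant \<subseteq> (\<Union>(A, g)\<in>P. A)"
    "\<forall>(A, g)\<in>P. is_poly_deg D g \<and> (\<forall>x\<in>A \<inter> nonneg_orthant. \<phi> x = g x)"
    using assms unfolding is_pw_poly_deg_def by blast
  have "\<forall>p\<in>P. \<exists>C\<ge>0. \<forall>x. \<bar>snd p x\<bar> \<le> C * (1 + norm x ^ D)"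
    using P(3) poly_growth by fastforce
  then obtain Cf where Cf: "\<forall>p\<in>P. Cf p \<ge> 0 \<and> (\<forall>x. \<bar>snd p x\<bar> \<le> Cf p * (1 + norm x ^ D))"
    by metis
  define C where "C = (\<Sum>p\<in>P. Cf p)"
  have C0: "C \<ge> 0" unfolding C_def using Cf by (simp add: sum_nonneg)
  have "\<bar>\<phi> x\<bar> \<le> C * (1 + norm x ^ D)" if x: "x \<in> nonneg_orthant" for x
  proof -
    obtain A g where Ag: "(A, g) \<in> P" "x \<in> A" using P(2) x by blast
    then have "\<phi> x = g x" using P(3) x by blast
    then have "\<bar>\<phi> x\<bar> \<le> Cf (A, g) * (1 + norm x ^ D)" using Cf Ag by fastforce
    also have "Cf (A, g) \<le> C" unfolding C_def using Ag(1) P(1) Cf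
      by (intro member_le_sum) auto
    then have "Cf (A, g) * (1 + norm x ^ D) \<le> C * (1 + norm x ^ D)"
      by (intro mult_right_mono) auto
    finally show ?thesis .
  qed
  then show ?thesis unfolding orth_growth_def using C0 by blast
qed

lemma call_growth: "orth_growth (\<lambda>x::real^'n. max 0 (x $ i - k)) 1"
proof -
  have "\<bar>max 0 (x $ i - k)\<bar> \<le> (1 + \<bar>k\<bar>) * (1 + norm x ^ 1)" for x :: "real^'n"
  proof -
    have "\<bar>max 0 (x $ i - k)\<bar> \<le> \<bar>x $ i\<bar> + \<bar>k\<bar>" by auto
    also have "\<dots> \<le> norm x + \<bar>k\<bar>" using component_le_norm_cart[of x i] by simp
    also have "\<dots> \<le> (1 + \<bar>k\<bar>) * (1 + norm x ^ 1)" by (simp add: algebra_simps)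
    finally show ?thesis .
  qed
  then show ?thesis unfolding orth_growth_def by (intro exI[of _ "1 + \<bar>k\<bar>"]) auto
qed

lemma const_growth: "orth_growth (\<lambda>x::real^'n. c) 0"
  unfolding orth_growth_def by (intro exI[of _ "\<bar>c\<bar>"]) auto

lemma poly_orth_growth: "is_poly_deg D f \<Longrightarrow> orth_growth f D"
  using poly_growth unfolding orth_growth_def by blast

lemma iter_subseq:
  fixes P :: "(nat \<Rightarrow> nat) \<Rightarrow> nat \<Rightarrow> bool"
  assumes closed: "\<And>(r::nat\<Rightarrow>nat) (q::nat\<Rightarrow>nat) j. P r j \<Longrightarrow> strict_mono q \<Longrightarrow> P (r \<circ> q) j"
    and ex: "\<And>(r::nat\<Rightarrow>nat) j. strict_mono r \<Longrightarrow> \<exists>q::nat\<Rightarrow>nat. strict_mono q \<and> P (r \<circ> q) j"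
  shows "\<exists>r::nat\<Rightarrow>nat. strict_mono r \<and> (\<forall>j<K. P r j)"
proof (induction K)
  case 0
  show ?case by (intro exI[of _ id]) (auto simp: strict_mono_def)
next
  case (Suc K)
  then obtain r :: "nat \<Rightarrow> nat" where r: "strict_mono r" "\<forall>j<K. P r j" by blast
  obtain q :: "nat \<Rightarrow> nat" where q: "strict_mono q" "P (r \<circ> q) K" using ex r(1) by blast
  have "\<forall>j<Suc K. P (r \<circ> q) j"
    using r(2) q closed by (auto simp: less_Suc_eq)
  moreover have "strict_mono (r \<circ> q)" using r(1) q(1) by (rule strict_mono_o)
  ultimately show ?case by blast
qed

lemma seq_compact_sub:
  fixes f :: "nat \<Rightarrow> 'a::metric_space"
  assumes "compact S" "\<forall>n. f n \<in> S"
  obtains l r where "l \<in> S" "strict_mono r" "(f \<circ> r) \<longlonglongrightarrow> l"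
  using seq_compactE[OF compact_imp_seq_compact[OF assms(1)] assms(2)] by blast

lemma subseq_component:
  fixes a :: "nat \<Rightarrow> real" and z :: "nat \<Rightarrow> real^'n"
  assumes a: "\<forall>s. 0 \<le> a s \<and> a s \<le> 1"
  shows "\<exists>q. strict_mono q \<and> convergent (\<lambda>s. a (q s)) \<and>
    (convergent (\<lambda>s. z (q s)) \<or> filterlim (\<lambda>s. norm (z (q s))) at_top sequentially)"
proof (cases "\<exists>B. infinite {s. norm (z s) \<le> B}")
  case True
  then obtain B where "infinite {s. norm (z s) \<le> B}" by blast
  then obtain q1 :: "nat \<Rightarrow> nat" where q1: "strict_mono q1" "\<forall>n. q1 n \<in> {s. norm (z s) \<le> B}"
    using infinite_enumerate by blast
  define F where "F = (\<lambda>n. (a (q1 n), z (q1 n)))"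
  have "\<forall>n. F n \<in> {0..1} \<times> cball 0 B" using q1 a by (auto simp: F_def)
  moreover have "compact ({0..1::real} \<times> cball (0::real^'n) B)" by (intro compact_Times) auto
  ultimately obtain l r where lr: "strict_mono r" "(F \<circ> r) \<longlonglongrightarrow> l"
    using seq_compact_sub by blast
  have "(\<lambda>s. fst (F (r s))) \<longlonglongrightarrow> fst l" "(\<lambda>s. snd (F (r s))) \<longlonglongrightarrow> snd l"
    using tendsto_fst[OF lr(2)] tendsto_snd[OF lr(2)] by (simp_all add: o_def)
  then have "convergent (\<lambda>s. a ((q1 \<circ> r) s))" "convergent (\<lambda>s. z ((q1 \<circ> r) s))"
    by (auto simp: F_def convergent_def)
  moreover have "strict_mono (q1 \<circ> r)" using q1(1) lr(1) by (rule strict_mono_o)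
  ultimately show ?thesis by blast
next
  case False
  then have fin: "\<And>B. finite {s. norm (z s) \<le> B}" by blast
  have lim: "filterlim (\<lambda>s. norm (z s)) at_top sequentially"
  proof (subst filterlim_at_top, intro allI)
    fix B
    have "eventually (\<lambda>s. \<not> norm (z s) \<le> B) cofinite"
      unfolding eventually_cofinite using fin[of B] by simp
    then show "eventually (\<lambda>s. B \<le> norm (z s)) sequentially"
      unfolding cofinite_eq_sequentially by (rule eventually_mono) auto
  qed
  have "\<forall>n. a n \<in> {0..1}" using a by auto
  moreover have "compact {0..1::real}" by simp
  ultimately obtain l r where lr: "strict_mono r" "(a \<circ> r) \<longlonglongrightarrow> l"
    using seq_compact_sub by blast
  have "convergent (\<lambda>s. a (r s))" using lr(2) by (auto simp: convergent_def o_def)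
  moreover have "filterlim (\<lambda>s. norm (z (r s))) at_top sequentially"
    using filterlim_compose[OF lim filterlim_subseq[OF lr(1)]] by (simp add: o_def)
  ultimately show ?thesis using lr(1) by blast
qed

lemma closed_orthant: "closed (nonneg_orthant :: (real^'n) set)"
  unfolding nonneg_orthant_def
  by (intro closed_Collect_all closed_Collect_le continuous_intros continuous_on_component continuous_on_id)

lemma zero_orthant: "0 \<in> nonneg_orthant"
  by (simp add: nonneg_orthant_def)

lemma inv_pow_tendsto:
  fixes z :: "nat \<Rightarrow> real^'n"
  assumes "filterlim (\<lambda>s. norm (z s)) at_top sequentially" "0 < e"
  shows "(\<lambda>s. M / norm (z s) ^ e) \<longlonglongrightarrow> 0"
proof -
  have "filterlim (\<lambda>s. norm (z s) ^ e) at_top sequentially"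
    by (rule filterlim_pow_at_top[OF assms(2) assms(1)])
  then have "filterlim (\<lambda>s. norm (z s) ^ e) at_infinity sequentially"
    by (rule filterlim_at_top_imp_at_infinity)
  then show ?thesis by (intro tendsto_divide_0[OF tendsto_const])
qed

lemma limit_config:
  fixes w :: "nat \<Rightarrow> nat \<Rightarrow> real" and x :: "nat \<Rightarrow> nat \<Rightarrow> real^'n" and K d :: nat and M :: real
  assumes w0: "\<forall>s j. 0 \<le> w s j" and xo: "\<forall>s j. x s j \<in> nonneg_orthant"
    and w1: "\<forall>s. (\<Sum>j<K. w s j) = 1"
    and mom: "\<forall>s. (\<Sum>j<K. w s j * norm (x s j) ^ d) \<le> M"
    and d0: "0 < d"
  shows "\<exists>r w' x'. strict_mono r \<and> (\<forall>j. 0 \<le> w' j) \<and> (\<forall>j. x' j \<in> nonneg_orthant) \<and>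
     (\<Sum>j<K. w' j * norm (x' j) ^ d) \<le> M \<and>
     (\<forall>h D. continuous_on nonneg_orthant h \<longrightarrow> orth_growth h D \<longrightarrow> D < d \<longrightarrow>
        (\<lambda>s. \<Sum>j<K. w (r s) j * h (x (r s) j)) \<longlonglongrightarrow> (\<Sum>j<K. w' j * h (x' j)))"
proof -
  have wle1: "w s j \<le> 1" if "j < K" for s j
  proof -
    have "w s j \<le> (\<Sum>j<K. w s j)" using that w0 by (intro member_le_sum) auto
    then show ?thesis using w1 by simp
  qed
  have mterm: "w s j * norm (x s j) ^ d \<le> M" if "j < K" for s j
  proof -
    have "w s j * norm (x s j) ^ d \<le> (\<Sum>j<K. w s j * norm (x s j) ^ d)"
      using that w0 by (intro member_le_sum) auto
    then show ?thesis using mom by (meson order_trans)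
  qed
  define P where "P = (\<lambda>(r::nat\<Rightarrow>nat) j. j < K \<longrightarrow> convergent (\<lambda>s. w (r s) j) \<and>
      (convergent (\<lambda>s. x (r s) j) \<or> filterlim (\<lambda>s. norm (x (r s) j)) at_top sequentially))"
  have closedP: "P (r \<circ> q) j" if "P r j" "strict_mono q" for r q :: "nat \<Rightarrow> nat" and j
  proof -
    have a: "convergent (\<lambda>s. w (r s) j) \<Longrightarrow> convergent (\<lambda>s. w ((r \<circ> q) s) j)"
      using convergent_subseq_convergent[OF _ that(2), of "\<lambda>s. w (r s) j"] by (simp add: o_def)
    have b: "convergent (\<lambda>s. x (r s) j) \<Longrightarrow> convergent (\<lambda>s. x ((r \<circ> q) s) j)"
      using convergent_subseq_convergent[OF _ that(2), of "\<lambda>s. x (r s) j"] by (simp add: o_def)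
    have c: "filterlim (\<lambda>s. norm (x (r s) j)) at_top sequentially \<Longrightarrow>
        filterlim (\<lambda>s. norm (x ((r \<circ> q) s) j)) at_top sequentially"
      using filterlim_compose[OF _ filterlim_subseq[OF that(2)], of "\<lambda>s. norm (x (r s) j)"] by (simp add: o_def)
    show ?thesis using that(1) a b c unfolding P_def by blast
  qed
  have exP: "\<exists>q::nat\<Rightarrow>nat. strict_mono q \<and> P (r \<circ> q) j" if "strict_mono r" for r :: "nat \<Rightarrow> nat" and j
  proof (cases "j < K")
    case True
    have "\<forall>s. 0 \<le> w (r s) j \<and> w (r s) j \<le> 1" using w0 wle1 True by auto
    from subseq_component[OF this, of "\<lambda>s. x (r s) j"] obtain q :: "nat \<Rightarrow> nat" where
      "strict_mono q" "convergent (\<lambda>s. w (r (q s)) j)"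
      "convergent (\<lambda>s. x (r (q s)) j) \<or> filterlim (\<lambda>s. norm (x (r (q s)) j)) at_top sequentially"
      by blast
    then show ?thesis unfolding P_def by (intro exI[of _ q]) (simp add: o_def)
  next
    case False
    then show ?thesis unfolding P_def by (intro exI[of _ id]) (auto simp: strict_mono_def)
  qed
  obtain r :: "nat \<Rightarrow> nat" where r: "strict_mono r" "\<forall>j<K. P r j"
    using iter_subseq[of P K, OF closedP exP] by blast
  define cv where "cv = (\<lambda>j. convergent (\<lambda>s. x (r s) j))"
  define w' where "w' = (\<lambda>j. if j < K then lim (\<lambda>s. w (r s) j) else 0)"
  define x' where "x' = (\<lambda>j. if j < K \<and> cv j then lim (\<lambda>s. x (r s) j) else 0)"
  have W: "(\<lambda>s. w (r s) j) \<longlonglongrightarrow> w' j" if "j < K" for j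
    using r(2) that unfolding P_def w'_def by (simp add: convergent_LIMSEQ_iff)
  have X: "(\<lambda>s. x (r s) j) \<longlonglongrightarrow> x' j" if "j < K" "cv j" for j
    using that unfolding x'_def cv_def by (simp add: convergent_LIMSEQ_iff)
  have esc: "filterlim (\<lambda>s. norm (x (r s) j)) at_top sequentially" if "j < K" "\<not> cv j" for j
    using r(2) that unfolding P_def cv_def by blast
  have ev1: "eventually (\<lambda>s. 1 \<le> norm (x (r s) j)) sequentially" if "j < K" "\<not> cv j" for j
    using esc[OF that] by (simp add: filterlim_at_top)
  have W0: "(\<lambda>s. w (r s) j) \<longlonglongrightarrow> 0" if j: "j < K" "\<not> cv j" for j
  proof (rule Lim_null_comparison)
    show "eventually (\<lambda>s. norm (w (r s) j) \<le> M / norm (x (r s) j) ^ d) sequentially"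
      using ev1[OF j]
    proof (rule eventually_mono)
      fix s assume n1: "1 \<le> norm (x (r s) j)"
      then have pos: "0 < norm (x (r s) j) ^ d" by (intro zero_less_power) linarith
      have "w (r s) j * norm (x (r s) j) ^ d \<le> M" using mterm j by blast
      then have "w (r s) j \<le> M / norm (x (r s) j) ^ d" using pos by (simp add: field_simps)
      then show "norm (w (r s) j) \<le> M / norm (x (r s) j) ^ d" using w0 by simp
    qed
    show "(\<lambda>s. M / norm (x (r s) j) ^ d) \<longlonglongrightarrow> 0"
      by (rule inv_pow_tendsto[OF esc[OF j] d0])
  qed
  have w'esc: "w' j = 0" if "j < K" "\<not> cv j" for j
    using LIMSEQ_unique[OF W[OF that(1)] W0[OF that]] .
  have w'0: "\<forall>j. 0 \<le> w' j"
  proof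
    fix j show "0 \<le> w' j"
    proof (cases "j < K")
      case True
      show ?thesis by (rule LIMSEQ_le_const[OF W[OF True]]) (use w0 in auto)
    next
      case False then show ?thesis by (simp add: w'_def)
    qed
  qed
  have x'o: "\<forall>j. x' j \<in> nonneg_orthant"
  proof
    fix j show "x' j \<in> nonneg_orthant"
    proof (cases "j < K \<and> cv j")
      case True
      show ?thesis by (rule Lim_in_closed_set[OF closed_orthant _ _ X]) (use xo True in auto)
    next
      case False then show ?thesis by (auto simp: x'_def zero_orthant)
    qed
  qed
  have termc: "(\<lambda>s. w (r s) j * h (x (r s) j)) \<longlonglongrightarrow> w' j * h (x' j)"
    if h: "continuous_on nonneg_orthant h" "orth_growth h D" "D < d" and j: "j < K" for h D j
  proof (cases "cv j")
    case True
    have "(\<lambda>s. h (x (r s) j)) \<longlonglongrightarrow> h (x' j)"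
      by (rule continuous_on_tendsto_compose[OF h(1) X[OF j True]]) (use x'o xo in auto)
    then show ?thesis by (intro tendsto_mult W j)
  next
    case False
    obtain C where C: "C \<ge> 0" "\<forall>y\<in>nonneg_orthant. \<bar>h y\<bar> \<le> C * (1 + norm y ^ D)"
      using h(2) unfolding orth_growth_def by blast
    have "(\<lambda>s. w (r s) j * h (x (r s) j)) \<longlonglongrightarrow> 0"
    proof (rule Lim_null_comparison)
      show "eventually (\<lambda>s. norm (w (r s) j * h (x (r s) j)) \<le>
          C * (w (r s) j + M / norm (x (r s) j) ^ (d - D))) sequentially"
        using ev1[OF j False]
      proof (rule eventually_mono)
        fix s assume n1: "1 \<le> norm (x (r s) j)"
        define nx where "nx = norm (x (r s) j)"
        define ws where "ws = w (r s) j"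
        have nx1: "1 \<le> nx" using n1 by (simp add: nx_def)
        have ws0: "0 \<le> ws" using w0 by (simp add: ws_def)
        have pos: "0 < nx ^ (d - D)" using nx1 by (intro zero_less_power) linarith
        have split: "nx ^ d = nx ^ D * nx ^ (d - D)" using h(3) by (simp flip: power_add)
        have "ws * nx ^ d \<le> M" using mterm j by (simp add: ws_def nx_def)
        then have "(ws * nx ^ D) * nx ^ (d - D) \<le> M" by (simp add: split mult.assoc)
        then have wD: "ws * nx ^ D \<le> M / nx ^ (d - D)" using pos by (simp add: field_simps)
        have "norm (ws * h (x (r s) j)) = ws * \<bar>h (x (r s) j)\<bar>" using ws0 by (simp add: abs_mult)
        also have "\<dots> \<le> ws * (C * (1 + nx ^ D))"
          using C(2) xo ws0 by (intro mult_left_mono) (auto simp: nx_def)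
        also have "\<dots> = C * (ws + ws * nx ^ D)" by (simp add: algebra_simps)
        also have "\<dots> \<le> C * (ws + M / nx ^ (d - D))" using wD C(1) by (intro mult_left_mono) auto
        finally show "norm (w (r s) j * h (x (r s) j)) \<le> C * (w (r s) j + M / norm (x (r s) j) ^ (d - D))"
          by (simp add: ws_def nx_def)
      qed
      have "(\<lambda>s. C * (w (r s) j + M / norm (x (r s) j) ^ (d - D))) \<longlonglongrightarrow> C * (0 + 0)"
        using h(3) by (intro tendsto_mult tendsto_add tendsto_const W0[OF j False] inv_pow_tendsto[OF esc[OF j False]]) simp
      then show "(\<lambda>s. C * (w (r s) j + M / norm (x (r s) j) ^ (d - D))) \<longlonglongrightarrow> 0" by simp
    qed
    then show ?thesis using w'esc[OF j False] by simp
  qed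
  have conv: "(\<lambda>s. \<Sum>j<K. w (r s) j * h (x (r s) j)) \<longlonglongrightarrow> (\<Sum>j<K. w' j * h (x' j))"
    if "continuous_on nonneg_orthant h" "orth_growth h D" "D < d" for h D
    by (intro tendsto_sum termc[OF that]) simp
  define ms where "ms = (\<lambda>s. \<Sum>j<K. if cv j then w (r s) j * norm (x (r s) j) ^ d else 0)"
  have "ms \<longlonglongrightarrow> (\<Sum>j<K. if cv j then w' j * norm (x' j) ^ d else 0)"
    unfolding ms_def by (intro tendsto_sum) (auto intro!: tendsto_mult tendsto_power tendsto_norm W X)
  moreover have "(\<Sum>j<K. if cv j then w' j * norm (x' j) ^ d else 0) = (\<Sum>j<K. w' j * norm (x' j) ^ d)"
    by (intro sum.cong) (auto simp: w'esc)
  moreover have "ms s \<le> M" for s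
  proof -
    have "ms s \<le> (\<Sum>j<K. w (r s) j * norm (x (r s) j) ^ d)"
      unfolding ms_def by (intro sum_mono) (auto simp: w0)
    then show ?thesis using mom by (meson order_trans)
  qed
  ultimately have momlim: "(\<Sum>j<K. w' j * norm (x' j) ^ d) \<le> M"
    by (metis LIMSEQ_le_const2)
  show ?thesis
    using r(1) w'0 x'o momlim conv by blast
qed

definition amu :: "(real^'n) set \<Rightarrow> (real^'n \<Rightarrow> real) \<Rightarrow> (real^'n) measure" where
  "amu X \<alpha> = distr (point_measure X (\<lambda>y. ennreal (\<alpha> y))) borel (\<lambda>y. y)"

lemma amu_facts:
  fixes X :: "(real^'n) set"
  assumes fX: "finite X" and a0: "\<forall>y\<in>X. 0 \<le> \<alpha> y"
  shows "sets (amu X \<alpha>) = sets borel"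
    and "space (amu X \<alpha>) = UNIV"
    and "A \<in> sets borel \<Longrightarrow> emeasure (amu X \<alpha>) A = (\<Sum>y\<in>X \<inter> A. ennreal (\<alpha> y))"
    and "h \<in> borel_measurable borel \<Longrightarrow> integrable (amu X \<alpha>) h"
    and "h \<in> borel_measurable borel \<Longrightarrow> (\<integral>y. h y \<partial>amu X \<alpha>) = (\<Sum>y\<in>X. \<alpha> y * h y)"
    and "g \<in> borel_measurable borel \<Longrightarrow> (\<integral>\<^sup>+y. g y \<partial>amu X \<alpha>) = (\<Sum>y\<in>X. ennreal (\<alpha> y) * g y)"
proof -
  have meas: "(\<lambda>y. y) \<in> measurable (point_measure X (\<lambda>y. ennreal (\<alpha> y))) borel" by simp
  show "sets (amu X \<alpha>) = sets borel" by (simp add: amu_def)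
  show "space (amu X \<alpha>) = UNIV" by (simp add: amu_def)
  show "emeasure (amu X \<alpha>) A = (\<Sum>y\<in>X \<inter> A. ennreal (\<alpha> y))" if "A \<in> sets borel"
  proof -
    have "emeasure (amu X \<alpha>) A = emeasure (point_measure X (\<lambda>y. ennreal (\<alpha> y))) ((\<lambda>y. y) -` A \<inter> X)"
      unfolding amu_def using emeasure_distr[OF meas that] by (simp add: space_point_measure)
    also have "(\<lambda>y. y) -` A \<inter> X = A \<inter> X" by auto
    also have "emeasure (point_measure X (\<lambda>y. ennreal (\<alpha> y))) (A \<inter> X) = (\<Sum>y\<in>A \<inter> X. ennreal (\<alpha> y))"
      by (rule emeasure_point_measure_finite2) (use fX in auto)
    finally show ?thesis by (simp add: Int_commute)
  qed
  show "integrable (amu X \<alpha>) h" if "h \<in> borel_measurable borel"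
    unfolding amu_def using that fX
    by (subst integrable_distr_eq[OF meas that]) (simp add: integrable_point_measure_finite)
  show "(\<integral>y. h y \<partial>amu X \<alpha>) = (\<Sum>y\<in>X. \<alpha> y * h y)" if "h \<in> borel_measurable borel"
  proof -
    have "(\<integral>y. h y \<partial>amu X \<alpha>) = (\<integral>y. h y \<partial>point_measure X (\<lambda>y. ennreal (\<alpha> y)))"
      unfolding amu_def by (rule integral_distr[OF meas that])
    also have "\<dots> = (\<Sum>y\<in>X. \<alpha> y * h y)"
      using fX a0 by (subst lebesgue_integral_point_measure_finite) auto
    finally show ?thesis .
  qed
  show "(\<integral>\<^sup>+y. g y \<partial>amu X \<alpha>) = (\<Sum>y\<in>X. ennreal (\<alpha> y) * g y)" if "g \<in> borel_measurable borel"
  proof -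
    have "(\<integral>\<^sup>+y. g y \<partial>amu X \<alpha>) = (\<integral>\<^sup>+y. g y \<partial>point_measure X (\<lambda>y. ennreal (\<alpha> y)))"
      unfolding amu_def using that by (subst nn_integral_distr[OF meas]) auto
    also have "\<dots> = (\<Sum>y\<in>X. ennreal (\<alpha> y) * g y)"
      using fX by (rule nn_integral_point_measure_finite)
    finally show ?thesis .
  qed
qed

definition cfg_ok :: "nat \<Rightarrow> ('n \<Rightarrow> nat) \<Rightarrow> ('n \<Rightarrow> nat \<Rightarrow> real) \<Rightarrow> ('n \<Rightarrow> nat \<Rightarrow> real) \<Rightarrow> nat \<Rightarrow>
   (nat \<Rightarrow> real^'n \<Rightarrow> real) \<Rightarrow> (nat \<Rightarrow> real) \<Rightarrow> real \<Rightarrow> nat \<Rightarrow> (nat \<Rightarrow> real) \<Rightarrow> (nat \<Rightarrow> real^'n) \<Rightarrow> bool" where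
  "cfg_ok K N k q m f p M d w x \<longleftrightarrow> (\<forall>j. 0 \<le> w j) \<and> (\<forall>j. x j \<in> nonneg_orthant) \<and> (\<Sum>j<K. w j) = 1 \<and>
     (\<forall>i. \<forall>jj\<in>{1..N i}. (\<Sum>j<K. w j * max 0 (x j $ i - k i jj)) = q i jj) \<and>
     (\<forall>l\<in>{1..m}. (\<Sum>j<K. w j * f l (x j)) = p l) \<and> (\<Sum>j<K. w j * norm (x j) ^ d) \<le> M"

lemma closed_orthant_borel: "nonneg_orthant \<in> sets (borel :: (real^'n) measure)"
  using closed_orthant by (rule borel_closed)

lemma call_meas: "(\<lambda>y::real^'n. max 0 (y $ i - c)) \<in> borel_measurable borel"
  by (intro borel_measurable_continuous_onI continuous_intros continuous_on_component continuous_on_id)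

lemma norm_pow_meas: "(\<lambda>y::real^'n. norm y ^ d) \<in> borel_measurable borel"
  by (intro borel_measurable_continuous_onI continuous_intros)

lemma cfg_to_meas:
  fixes x :: "nat \<Rightarrow> real^'n" and w :: "nat \<Rightarrow> real" and \<phi> :: "real^'n \<Rightarrow> real"
  assumes cfg: "cfg_ok K N k q m f p M d w x"
    and phim: "\<phi> \<in> borel_measurable borel"
    and fm: "\<forall>l\<in>{1..m}. f l \<in> borel_measurable borel"
  shows "\<exists>\<nu>\<in>feasible_measures N k q m f p M d \<phi>. atomic_measure_le K \<nu> \<and>
           (\<integral>y. \<phi> y \<partial>\<nu>) = (\<Sum>j<K. w j * \<phi> (x j))"
proof -
  note c = cfg[unfolded cfg_ok_def]
  define X where "X = x ` {..<K}"
  define \<alpha> where "\<alpha> = (\<lambda>y. \<Sum>j\<in>{j\<in>{..<K}. x j = y}. w j)"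
  have fX: "finite X" by (simp add: X_def)
  have a0: "\<forall>y\<in>X. 0 \<le> \<alpha> y" using c by (auto simp: \<alpha>_def intro!: sum_nonneg)
  have Xo: "X \<subseteq> nonneg_orthant" using c by (auto simp: X_def)
  have sumconv: "(\<Sum>y\<in>X. \<alpha> y * h y) = (\<Sum>j<K. w j * h (x j))" for h :: "real^'n \<Rightarrow> real"
  proof -
    have "(\<Sum>j<K. w j * h (x j)) = (\<Sum>y\<in>X. \<Sum>j\<in>{j\<in>{..<K}. x j = y}. w j * h (x j))"
      unfolding X_def by (rule sum.image_gen) simp
    also have "\<dots> = (\<Sum>y\<in>X. \<Sum>j\<in>{j\<in>{..<K}. x j = y}. w j * h y)"
      by (intro sum.cong) auto
    also have "\<dots> = (\<Sum>y\<in>X. \<alpha> y * h y)"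
      by (simp add: \<alpha>_def sum_distrib_right)
    finally show ?thesis by simp
  qed
  define \<nu> where "\<nu> = amu X \<alpha>"
  note F = amu_facts[OF fX a0, folded \<nu>_def]
  have int_eq: "integrable \<nu> h \<and> (\<integral>y. h y \<partial>\<nu>) = (\<Sum>j<K. w j * h (x j))" if "h \<in> borel_measurable borel" for h
    using F(4)[OF that] F(5)[OF that] sumconv by simp
  have mass: "emeasure \<nu> UNIV = 1"
  proof -
    have "emeasure \<nu> UNIV = (\<Sum>y\<in>X. ennreal (\<alpha> y))" using F(3)[of UNIV] by simp
    also have "\<dots> = ennreal (\<Sum>y\<in>X. \<alpha> y)" using a0 by (intro sum_ennreal) auto
    also have "(\<Sum>y\<in>X. \<alpha> y) = 1" using sumconv[of "\<lambda>_. 1"] c by simp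
    finally show ?thesis by simp
  qed
  have outside: "emeasure \<nu> (UNIV - nonneg_orthant) = 0"
  proof -
    have "UNIV - nonneg_orthant \<in> sets (borel :: (real^'n) measure)"
      using closed_orthant_borel by auto
    then have "emeasure \<nu> (UNIV - nonneg_orthant) = (\<Sum>y\<in>X \<inter> (UNIV - nonneg_orthant). ennreal (\<alpha> y))"
      using F(3) by blast
    also have "X \<inter> (UNIV - nonneg_orthant) = {}" using Xo by auto
    finally show ?thesis by simp
  qed
  have momnn: "(\<integral>\<^sup>+y. ennreal (norm y ^ d) \<partial>\<nu>) \<le> ennreal M"
  proof -
    have "(\<integral>\<^sup>+y. ennreal (norm y ^ d) \<partial>\<nu>) = (\<Sum>y\<in>X. ennreal (\<alpha> y) * ennreal (norm y ^ d))"
      using F(6) norm_pow_meas by (simp add: measurable_compose[OF _ measurable_ennreal])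
    also have "\<dots> = (\<Sum>y\<in>X. ennreal (\<alpha> y * norm y ^ d))"
      using a0 by (intro sum.cong) (auto simp: ennreal_mult)
    also have "\<dots> = ennreal (\<Sum>y\<in>X. \<alpha> y * norm y ^ d)"
      using a0 by (intro sum_ennreal) auto
    also have "(\<Sum>y\<in>X. \<alpha> y * norm y ^ d) = (\<Sum>j<K. w j * norm (x j) ^ d)" by (rule sumconv)
    finally show ?thesis using c by (simp add: ennreal_leI)
  qed
  have feas: "\<nu> \<in> feasible_measures N k q m f p M d \<phi>"
    unfolding feasible_measures_def
  proof (intro CollectI conjI ballI allI)
    show "sets \<nu> = sets borel" by (rule F(1))
    show "finite_measure \<nu>" using mass F(2) by (intro finite_measureI) simp
    show "emeasure \<nu> (UNIV - nonneg_orthant) = 0" by (rule outside)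
    show "integrable \<nu> \<phi>" using int_eq[OF phim] by simp
    show "emeasure \<nu> (space \<nu>) = 1" using mass F(2) by simp
    show "(\<integral>\<^sup>+y. ennreal (norm y ^ d) \<partial>\<nu>) \<le> ennreal M" by (rule momnn)
  next
    fix i jj assume jj: "jj \<in> {1..N i}"
    show "integrable \<nu> (\<lambda>y. max 0 (y $ i - k i jj))" using int_eq[OF call_meas] by simp
    show "(\<integral>y. max 0 (y $ i - k i jj) \<partial>\<nu>) = q i jj" using int_eq[OF call_meas] c jj by simp
  next
    fix l assume l: "l \<in> {1..m}"
    show "integrable \<nu> (f l)" using int_eq fm l by blast
    show "(\<integral>y. f l y \<partial>\<nu>) = p l" using int_eq[of "f l"] fm l c by simp
  qed
  have atom: "atomic_measure_le K \<nu>"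
    unfolding atomic_measure_le_def
  proof (intro exI[of _ X] exI[of _ \<alpha>] conjI ballI)
    show "finite X" by (rule fX)
    show "card X \<le> K" unfolding X_def using card_image_le[of "{..<K}" x] by simp
    show "sets \<nu> = sets borel" by (rule F(1))
  next
    fix y assume "y \<in> X" then show "0 \<le> \<alpha> y" using a0 by blast
  next
    fix A :: "(real^'n) set" assume "A \<in> sets borel"
    then show "emeasure \<nu> A = (\<Sum>y\<in>X \<inter> A. ennreal (\<alpha> y))" by (rule F(3))
  qed
  show ?thesis using feas atom int_eq[OF phim] by blast
qed

lemma meas_to_cfg:
  fixes \<mu> :: "(real^'n) measure" and \<phi> :: "real^'n \<Rightarrow> real" and N :: "'n \<Rightarrow> nat"
  assumes mu: "\<mu> \<in> feasible_measures N k q m f p M d \<phi>"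
    and K: "(\<Sum>i\<in>UNIV. N i) + m + 3 \<le> K" and M0: "0 \<le> M"
  shows "\<exists>w x. cfg_ok K N k q m f p M d w x \<and> (\<Sum>j<K. w j * \<phi> (x j)) = (\<integral>y. \<phi> y \<partial>\<mu>)"
proof -
  have sets: "sets \<mu> = sets borel" and mf3: "emeasure \<mu> (UNIV - nonneg_orthant) = 0"
    and mf4: "integrable \<mu> \<phi>"
    and mf5: "\<forall>i. \<forall>j\<in>{1..N i}. integrable \<mu> (\<lambda>x. max 0 (x $ i - k i j)) \<and> (\<integral>x. max 0 (x $ i - k i j) \<partial>\<mu>) = q i j"
    and mf6: "\<forall>l\<in>{1..m}. integrable \<mu> (f l) \<and> (\<integral>x. f l x \<partial>\<mu>) = p l"
    and mf7: "emeasure \<mu> (space \<mu>) = 1"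
    and momfin: "(\<integral>\<^sup>+x. ennreal (norm x ^ d) \<partial>\<mu>) \<le> ennreal M"
    using mu unfolding feasible_measures_def mem_Collect_eq by blast+
  have space: "space \<mu> = UNIV" using sets_eq_imp_space_eq[OF sets] by simp
  have P: "prob_space \<mu>" using mf7 by (rule prob_spaceI)
  have AEo: "AE y in \<mu>. y \<in> nonneg_orthant"
  proof -
    have "open (- nonneg_orthant :: (real^'n) set)" by (rule open_Compl[OF closed_orthant])
    then have "- nonneg_orthant \<in> sets (borel :: (real^'n) measure)" by (rule borel_open)
    then have h1: "UNIV - nonneg_orthant \<in> sets \<mu>" unfolding sets by (simp add: Compl_eq_Diff_UNIV)
    have h2: "{y \<in> space \<mu>. \<not> y \<in> nonneg_orthant} = UNIV - nonneg_orthant" unfolding space by blast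
    show ?thesis using AE_iff_measurable[OF h1 h2] mf3 by simp
  qed
  have nm: "(\<lambda>y::real^'n. norm y ^ d) \<in> borel_measurable \<mu>"
    using norm_pow_meas measurable_cong_sets[OF sets refl] by blast
  have lt: "(\<integral>\<^sup>+y. ennreal (norm y ^ d) \<partial>\<mu>) < \<infinity>"
    using le_less_trans[OF momfin ennreal_less_top] by simp
  have intnorm: "integrable \<mu> (\<lambda>y. norm y ^ d)"
    by (rule integrableI_nonneg[OF nm _ lt]) simp
  have momle: "(\<integral>y. norm y ^ d \<partial>\<mu>) \<le> M"
  proof -
    have "(\<integral>\<^sup>+y. ennreal (norm y ^ d) \<partial>\<mu>) = ennreal (\<integral>y. norm y ^ d \<partial>\<mu>)"
      by (rule nn_integral_eq_integral[OF intnorm]) simp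
    then have "ennreal (\<integral>y. norm y ^ d \<partial>\<mu>) \<le> ennreal M" using momfin by simp
    then show ?thesis using M0 by simp
  qed
  define G :: "('n \<times> nat) + (nat + bool) \<Rightarrow> real^'n \<Rightarrow> real" where
    "G = (\<lambda>c. case c of Inl ij \<Rightarrow> (\<lambda>y. max 0 (y $ fst ij - k (fst ij) (snd ij)))
                | Inr (Inl l) \<Rightarrow> f l
                | Inr (Inr b) \<Rightarrow> (if b then \<phi> else (\<lambda>y. norm y ^ d)))"
  define I where "I = Inl ` (SIGMA i:UNIV. {1..N i}) \<union> Inr ` Inl ` {1..m} \<union> {Inr (Inr True), Inr (Inr False)}"
  have finI: "finite I" by (simp add: I_def)
  have intG: "\<forall>c\<in>I. integrable \<mu> (G c)"
  proof
    fix c assume "c \<in> I"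
    then consider (a) i jj where "c = Inl (i, jj)" "jj \<in> {1..N i}" | (b) l where "c = Inr (Inl l)" "l \<in> {1..m}"
      | (c) "c = Inr (Inr True)" | (d) "c = Inr (Inr False)" unfolding I_def by blast
    then show "integrable \<mu> (G c)"
    proof cases
      case a then show ?thesis using mf5 by (simp add: G_def)
    next
      case b then show ?thesis using mf6 by (simp add: G_def)
    next
      case c then show ?thesis using mf4 by (simp add: G_def)
    next
      case d then show ?thesis using intnorm by (simp add: G_def)
    qed
  qed
  have cI: "card I \<le> (\<Sum>i\<in>UNIV. N i) + m + 2"
  proof -
    define A1 :: "(('n \<times> nat) + (nat + bool)) set" where "A1 = Inl ` (SIGMA i:UNIV. {1..N i})"
    define A2 :: "(('n \<times> nat) + (nat + bool)) set" where "A2 = Inr ` Inl ` {1..m}"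
    define A3 :: "(('n \<times> nat) + (nat + bool)) set" where "A3 = {Inr (Inr True), Inr (Inr False)}"
    have "card I \<le> card (A1 \<union> A2) + card A3" unfolding I_def A1_def A2_def A3_def by (rule card_Un_le)
    moreover have "card (A1 \<union> A2) \<le> card A1 + card A2" by (rule card_Un_le)
    ultimately have c0: "card I \<le> card A1 + card A2 + card A3" by linarith
    have c1: "card A1 \<le> (\<Sum>i\<in>UNIV. N i)"
    proof -
      have "card A1 \<le> card (SIGMA i:UNIV. {1..N i})"
        unfolding A1_def by (rule card_image_le) simp
      also have "\<dots> = (\<Sum>i\<in>UNIV. N i)" by simp
      finally show ?thesis .
    qed
    have c2: "card A2 \<le> m"
      unfolding A2_def using card_image_le[of "Inl ` {1..m}" "Inr :: nat + bool \<Rightarrow> ('n \<times> nat) + (nat + bool)"]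
        card_image_le[of "{1..m}" "Inl :: nat \<Rightarrow> nat + bool"] by simp
    have c3: "card A3 \<le> 2" unfolding A3_def by (simp add: card_insert_if)
    show ?thesis using c0 c1 c2 c3 by linarith
  qed
  have "in_hull nonneg_orthant G I (\<lambda>c. \<integral>y. G c y \<partial>\<mu>)"
    by (rule richter[OF P finI intG AEo])
  then obtain X \<alpha> where X: "finite X" "X \<subseteq> nonneg_orthant" "\<forall>y\<in>X. 0 \<le> \<alpha> y" "sum \<alpha> X = 1"
    "\<forall>c\<in>I. (\<Sum>y\<in>X. \<alpha> y * G c y) = (\<integral>y. G c y \<partial>\<mu>)" unfolding in_hull_def by blast
  obtain Y \<alpha>' where Y: "Y \<subseteq> X" "card Y \<le> card I + 1" "\<forall>y\<in>Y. 0 \<le> \<alpha>' y" "sum \<alpha>' Y = sum \<alpha> X"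
    "\<forall>c\<in>I. (\<Sum>y\<in>Y. \<alpha>' y * G c y) = (\<Sum>y\<in>X. \<alpha> y * G c y)"
    using cara_reduce[OF finI X(1) X(3), of G] by blast
  have fY: "finite Y" using Y(1) X(1) finite_subset by blast
  have cYK: "card Y \<le> K" using Y(2) cI K by simp
  obtain e where e: "bij_betw e {0..<card Y} Y" using ex_bij_betw_nat_finite[OF fY] by blast
  define w where "w = (\<lambda>j. if j < card Y then \<alpha>' (e j) else 0)"
  define x where "x = (\<lambda>j. if j < card Y then e j else 0)"
  have conv: "(\<Sum>j<K. w j * h (x j)) = (\<Sum>y\<in>Y. \<alpha>' y * h y)" for h :: "real^'n \<Rightarrow> real"
  proof -
    have "(\<Sum>j<K. w j * h (x j)) = (\<Sum>j\<in>{0..<card Y}. w j * h (x j))"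
      using cYK by (intro sum.mono_neutral_right) (auto simp: w_def)
    also have "\<dots> = (\<Sum>j\<in>{0..<card Y}. \<alpha>' (e j) * h (e j))"
      by (intro sum.cong) (auto simp: w_def x_def)
    also have "\<dots> = (\<Sum>y\<in>Y. \<alpha>' y * h y)"
      by (rule sum.reindex_bij_betw[OF e])
    finally show ?thesis .
  qed
  have eY: "e j \<in> Y" if "j < card Y" for j using e that by (auto simp: bij_betw_def)
  have val: "(\<Sum>j<K. w j * G c (x j)) = (\<integral>y. G c y \<partial>\<mu>)" if "c \<in> I" for c
    using conv[of "G c"] Y(5) X(5) that by simp
  have cfg: "cfg_ok K N k q m f p M d w x"
    unfolding cfg_ok_def
  proof (intro conjI allI ballI)
    fix j
    show "0 \<le> w j" using Y(3) eY by (auto simp: w_def)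
    show "x j \<in> nonneg_orthant" using eY Y(1) X(2) zero_orthant by (auto simp: x_def)
  next
    show "(\<Sum>j<K. w j) = 1" using conv[of "\<lambda>_. 1"] Y(4) X(4) by simp
  next
    fix i jj assume jj: "jj \<in> {1..N i}"
    then have "Inl (i, jj) \<in> I" by (auto simp: I_def)
    from val[OF this] show "(\<Sum>j<K. w j * max 0 (x j $ i - k i jj)) = q i jj"
      using mf5 jj by (simp add: G_def)
  next
    fix l assume l: "l \<in> {1..m}"
    then have "Inr (Inl l) \<in> I" by (auto simp: I_def)
    from val[OF this] show "(\<Sum>j<K. w j * f l (x j)) = p l"
      using mf6 l by (simp add: G_def)
  next
    have "Inr (Inr False) \<in> I" by (auto simp: I_def)
    from val[OF this] show "(\<Sum>j<K. w j * norm (x j) ^ d) \<le> M"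
      using momle by (simp add: G_def)
  qed
  have "Inr (Inr True) \<in> I" by (auto simp: I_def)
  from val[OF this] have "(\<Sum>j<K. w j * \<phi> (x j)) = (\<integral>y. \<phi> y \<partial>\<mu>)" by (simp add: G_def)
  with cfg show ?thesis by blast
qed

lemma cfg_opt:
  fixes \<psi> :: "real^'n \<Rightarrow> real" and f :: "nat \<Rightarrow> real^'n \<Rightarrow> real" and N :: "'n \<Rightarrow> nat"
  assumes ex: "\<exists>w x. cfg_ok K N k q m f p M d w x"
    and \<psi>c: "continuous_on nonneg_orthant \<psi>" and \<psi>g: "orth_growth \<psi> D\<psi>" and \<psi>d: "D\<psi> < d"
    and fc: "\<forall>l\<in>{1..m}. continuous_on nonneg_orthant (f l) \<and> (\<exists>D<d. orth_growth (f l) D)"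
    and d1: "1 < d"
  shows "\<exists>w x. cfg_ok K N k q m f p M d w x \<and>
    (\<forall>w' x'. cfg_ok K N k q m f p M d w' x' \<longrightarrow> (\<Sum>j<K. w' j * \<psi> (x' j)) \<le> (\<Sum>j<K. w j * \<psi> (x j)))"
proof -
  define \<Phi> where "\<Phi> = (\<lambda>(w::nat \<Rightarrow> real) (x::nat \<Rightarrow> real^'n). \<Sum>j<K. w j * \<psi> (x j))"
  define S where "S = {\<Phi> w x | w x. cfg_ok K N k q m f p M d w x}"
  have Sne: "S \<noteq> {}" using ex by (auto simp: S_def)
  obtain C where C: "C \<ge> 0" "\<forall>y\<in>nonneg_orthant. \<bar>\<psi> y\<bar> \<le> C * (1 + norm y ^ D\<psi>)"
    using \<psi>g unfolding orth_growth_def by blast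
  have bnd: "\<Phi> w x \<le> C * (2 + M)" if c: "cfg_ok K N k q m f p M d w x" for w x
  proof -
    note cc = c[unfolded cfg_ok_def]
    have "\<Phi> w x \<le> (\<Sum>j<K. w j * (C * (2 + norm (x j) ^ d)))"
      unfolding \<Phi>_def
    proof (intro sum_mono)
      fix j assume "j \<in> {..<K}"
      have xo: "x j \<in> nonneg_orthant" and wj: "0 \<le> w j" using cc by blast+
      have "\<bar>\<psi> (x j)\<bar> \<le> C * (1 + norm (x j) ^ D\<psi>)" using C(2) xo by blast
      then have "\<psi> (x j) \<le> C * (1 + norm (x j) ^ D\<psi>)" by linarith
      also have "\<dots> \<le> C * (2 + norm (x j) ^ d)"
        using pow_le_1_plus[of D\<psi> d "norm (x j)"] \<psi>d C(1) by (intro mult_left_mono) auto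
      finally show "w j * \<psi> (x j) \<le> w j * (C * (2 + norm (x j) ^ d))"
        using wj by (rule mult_left_mono)
    qed
    also have "\<dots> = C * (2 * (\<Sum>j<K. w j) + (\<Sum>j<K. w j * norm (x j) ^ d))"
      by (simp add: sum_distrib_left algebra_simps sum.distrib)
    also have "\<dots> \<le> C * (2 + M)"
    proof -
      have "(\<Sum>j<K. w j) = 1" "(\<Sum>j<K. w j * norm (x j) ^ d) \<le> M" using cc by blast+
      then show ?thesis using C(1) by (intro mult_left_mono) auto
    qed
    finally show ?thesis .
  qed
  have bdd: "bdd_above S" unfolding S_def bdd_above_def using bnd by blast
  define V where "V = Sup S"
  have upper: "\<Phi> w x \<le> V" if "cfg_ok K N k q m f p M d w x" for w x
    unfolding V_def using that bdd by (intro cSup_upper) (auto simp: S_def)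
  have "\<forall>s::nat. \<exists>wx. cfg_ok K N k q m f p M d (fst wx) (snd wx) \<and> V - 1 / (real s + 1) < \<Phi> (fst wx) (snd wx)"
  proof
    fix s :: nat
    have "V - 1 / (real s + 1) < V" by simp
    then obtain z where "z \<in> S" "V - 1 / (real s + 1) < z" using less_cSupD[OF Sne] unfolding V_def by blast
    then show "\<exists>wx. cfg_ok K N k q m f p M d (fst wx) (snd wx) \<and> V - 1 / (real s + 1) < \<Phi> (fst wx) (snd wx)"
      unfolding S_def by auto
  qed
  then obtain F where F: "\<forall>s. cfg_ok K N k q m f p M d (fst (F s)) (snd (F s)) \<and> V - 1 / (real s + 1) < \<Phi> (fst (F s)) (snd (F s))"
    by metis
  define W where "W = (\<lambda>s. fst (F s))"
  define Xs where "Xs = (\<lambda>s. snd (F s))"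
  have cW: "cfg_ok K N k q m f p M d (W s) (Xs s)" for s using F by (simp add: W_def Xs_def)
  have vW: "V - 1 / (real s + 1) < \<Phi> (W s) (Xs s)" for s using F by (simp add: W_def Xs_def)
  note cWd = cW[unfolded cfg_ok_def]
  have W0: "\<forall>s j. 0 \<le> W s j" and Xo: "\<forall>s j. Xs s j \<in> nonneg_orthant"
    and W1: "\<forall>s. (\<Sum>j<K. W s j) = 1" and Wm: "\<forall>s. (\<Sum>j<K. W s j * norm (Xs s j) ^ d) \<le> M"
    and Wc: "\<And>s i jj. jj \<in> {1..N i} \<Longrightarrow> (\<Sum>j<K. W s j * max 0 (Xs s j $ i - k i jj)) = q i jj"
    and Wf: "\<And>s l. l \<in> {1..m} \<Longrightarrow> (\<Sum>j<K. W s j * f l (Xs s j)) = p l"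
    using cWd by blast+
  obtain r w' x' where L: "strict_mono r" "\<forall>j. 0 \<le> w' j" "\<forall>j. x' j \<in> nonneg_orthant"
     "(\<Sum>j<K. w' j * norm (x' j) ^ d) \<le> M"
     "\<forall>h D. continuous_on nonneg_orthant h \<longrightarrow> orth_growth h D \<longrightarrow> D < d \<longrightarrow>
        (\<lambda>s. \<Sum>j<K. W (r s) j * h (Xs (r s) j)) \<longlonglongrightarrow> (\<Sum>j<K. w' j * h (x' j))"
    using limit_config[OF W0 Xo W1 Wm] d1 by auto
  have const: "(\<Sum>j<K. w' j * h (x' j)) = c"
    if "continuous_on nonneg_orthant h" "orth_growth h D" "D < d" "\<forall>s. (\<Sum>j<K. W s j * h (Xs s j)) = c" for h D c
  proof -
    have "(\<lambda>s. \<Sum>j<K. W (r s) j * h (Xs (r s) j)) \<longlonglongrightarrow> (\<Sum>j<K. w' j * h (x' j))"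
      using L(5) that(1-3) by blast
    moreover have "(\<lambda>s. \<Sum>j<K. W (r s) j * h (Xs (r s) j)) = (\<lambda>s. c)" using that(4) by simp
    ultimately show ?thesis using LIMSEQ_unique tendsto_const by metis
  qed
  have cont1: "continuous_on nonneg_orthant (\<lambda>y::real^'n. 1::real)" by (intro continuous_intros)
  have contc: "continuous_on nonneg_orthant (\<lambda>y::real^'n. max 0 (y $ i - c))" for i c
    by (intro continuous_intros continuous_on_component continuous_on_id)
  have cfg': "cfg_ok K N k q m f p M d w' x'"
    unfolding cfg_ok_def
  proof (intro conjI allI ballI)
    show "\<And>j. 0 \<le> w' j" using L(2) by blast
    show "\<And>j. x' j \<in> nonneg_orthant" using L(3) by blast
    show "(\<Sum>j<K. w' j * norm (x' j) ^ d) \<le> M" by (rule L(4))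
    have "(\<Sum>j<K. w' j * 1) = 1"
      by (rule const[OF cont1 const_growth]) (use d1 W1 in auto)
    then show "(\<Sum>j<K. w' j) = 1" by simp
  next
    fix i jj assume jj: "jj \<in> {1..N i}"
    show "(\<Sum>j<K. w' j * max 0 (x' j $ i - k i jj)) = q i jj"
      by (rule const[OF contc call_growth]) (use d1 Wc jj in auto)
  next
    fix l assume l: "l \<in> {1..m}"
    obtain D where D: "D < d" "orth_growth (f l) D" using fc l by blast
    show "(\<Sum>j<K. w' j * f l (x' j)) = p l"
      by (rule const[OF _ D(2) D(1)]) (use fc l Wf in auto)
  qed
  have lim\<Phi>: "(\<lambda>s. \<Phi> (W (r s)) (Xs (r s))) \<longlonglongrightarrow> \<Phi> w' x'"
    using L(5) \<psi>c \<psi>g \<psi>d unfolding \<Phi>_def by blast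
  have geV: "V \<le> \<Phi> w' x'"
  proof (rule ccontr)
    assume "\<not> V \<le> \<Phi> w' x'"
    then have "0 < V - \<Phi> w' x'" by simp
    then obtain n where n: "inverse (real (Suc n)) < V - \<Phi> w' x'" using reals_Archimedean by blast
    have "V - 1 / (real n + 1) \<le> \<Phi> w' x'"
    proof (rule LIMSEQ_le_const[OF lim\<Phi>], intro exI allI impI)
      fix s assume "n \<le> s"
      then have "n \<le> r s" using seq_suble[OF L(1), of s] by simp
      then have "1 / (real (r s) + 1) \<le> 1 / (real n + 1)" by (intro divide_left_mono) auto
      then show "V - 1 / (real n + 1) \<le> \<Phi> (W (r s)) (Xs (r s))" using vW[of "r s"] by linarith
    qed
    moreover have "inverse (real (Suc n)) = 1 / (real n + 1)" by (simp add: inverse_eq_divide)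
    ultimately show False using n by linarith
  qed
  show ?thesis
  proof (intro exI conjI allI impI)
    show "cfg_ok K N k q m f p M d w' x'" by (rule cfg')
    fix w0 x0 assume "cfg_ok K N k q m f p M d w0 x0"
    then have "\<Phi> w0 x0 \<le> \<Phi> w' x'" using upper geV by (meson order_trans)
    then show "(\<Sum>j<K. w0 j * \<psi> (x0 j)) \<le> (\<Sum>j<K. w' j * \<psi> (x' j))" by (simp add: \<Phi>_def)
  qed
qed

theorem corollary1:
  fixes N :: "'n::finite \<Rightarrow> nat"
    and k q :: "'n \<Rightarrow> nat \<Rightarrow> real"
    and m :: nat
    and f :: "nat \<Rightarrow> real ^ 'n \<Rightarrow> real"
    and p :: "nat \<Rightarrow> real"
    and M :: real
    and \<phi> :: "real ^ 'n \<Rightarrow> real"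
    and d :: nat
  assumes f_poly: "\<forall>l\<in>{1..m}. is_poly (f l)"
    and M_nonneg: "0 \<le> M"
    and \<phi>_cont: "continuous_on nonneg_orthant \<phi>"
    and \<phi>_nonneg: "\<forall>x\<in>nonneg_orthant. 0 \<le> \<phi> x"
    and \<phi>_pw: "is_pw_poly nonneg_orthant \<phi>"
    and d_def: "d = (LEAST e. even e \<and>
                  e \<ge> Max ({pw_poly_deg nonneg_orthant \<phi>} \<union>
                        {pw_poly_deg nonneg_orthant (\<lambda>x. max 0 (x $ i - k i j)) | i j. j \<in> {1..N i}} \<union>
                        {poly_deg (f l) | l. l \<in> {1..m}}) + 1)"
    and feasible: "feasible_measures N k q m f p M d \<phi> \<noteq> {}"
  shows "(\<exists>\<mu>\<in>feasible_measures N k q m f p M d \<phi>.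
            atomic_measure_le (CARD('n) * (\<Sum>i\<in>UNIV. N i) + m + 3) \<mu> \<and>
            (\<forall>\<nu>\<in>feasible_measures N k q m f p M d \<phi>. (\<integral>x. \<phi> x \<partial>\<nu>) \<le> (\<integral>x. \<phi> x \<partial>\<mu>)))
       \<and> (\<exists>\<mu>\<in>feasible_measures N k q m f p M d \<phi>.
            atomic_measure_le (CARD('n) * (\<Sum>i\<in>UNIV. N i) + m + 3) \<mu> \<and>
            (\<forall>\<nu>\<in>feasible_measures N k q m f p M d \<phi>. (\<integral>x. \<phi> x \<partial>\<mu>) \<le> (\<integral>x. \<phi> x \<partial>\<nu>)))"
proof -
  define K where "K = CARD('n) * (\<Sum>i\<in>UNIV. N i) + m + 3"
  obtain \<mu>0 where mu0: "\<mu>0 \<in> feasible_measures N k q m f p M d \<phi>" using feasible by blast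
  have sets0: "sets \<mu>0 = sets borel" and int0: "integrable \<mu>0 \<phi>"
    using mu0 unfolding feasible_measures_def mem_Collect_eq by blast+
  have phim: "\<phi> \<in> borel_measurable borel"
    using borel_measurable_integrable[OF int0] measurable_cong_sets[OF sets0 refl] by blast
  define Sall where "Sall = {pw_poly_deg nonneg_orthant \<phi>} \<union>
                        {pw_poly_deg nonneg_orthant (\<lambda>x. max 0 (x $ i - k i j)) | i j. j \<in> {1..N i}} \<union>
                        {poly_deg (f l) | l. l \<in> {1..m}}"
  have dd: "d = (LEAST e. even e \<and> e \<ge> Max Sall + 1)" unfolding Sall_def by (rule d_def)
  have dprop: "even d \<and> Max Sall + 1 \<le> d"
    unfolding dd by (rule LeastI[of _ "2 * (Max Sall + 1)"]) simp
  have S2eq: "{pw_poly_deg nonneg_orthant (\<lambda>x. max 0 (x $ i - k i j)) | i j. j \<in> {1..N i}} =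
      (\<lambda>(i, j). pw_poly_deg nonneg_orthant (\<lambda>x::real^'n. max 0 (x $ i - k i j))) ` (SIGMA i:UNIV. {1..N i})"
    by (auto simp del: atLeastAtMost_iff)
  have S3eq: "{poly_deg (f l) | l. l \<in> {1..m}} = (\<lambda>l. poly_deg (f l)) ` {1..m}" by auto
  have finS: "finite Sall" unfolding Sall_def S2eq S3eq by simp
  have leMax: "a \<in> Sall \<Longrightarrow> a < d" for a
    using Max_ge[OF finS, of a] dprop by linarith
  have d1: "1 < d"
  proof -
    have "1 \<le> d" using dprop by linarith
    moreover have "d \<noteq> 1" using dprop by auto
    ultimately show ?thesis by linarith
  qed
  define D\<phi> where "D\<phi> = pw_poly_deg nonneg_orthant \<phi>"
  have D\<phi>d: "D\<phi> < d" unfolding D\<phi>_def by (rule leMax) (simp add: Sall_def)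
  have "is_pw_poly_deg nonneg_orthant D\<phi> \<phi>"
    unfolding D\<phi>_def pw_poly_deg_def using \<phi>_pw unfolding is_pw_poly_def by (rule LeastI_ex)
  then have \<phi>g: "orth_growth \<phi> D\<phi>" by (rule pw_growth)
  have fprops: "continuous_on UNIV (f l) \<and> orth_growth (f l) (poly_deg (f l)) \<and> poly_deg (f l) < d"
    if l: "l \<in> {1..m}" for l
  proof -
    have "\<exists>D. is_poly_deg D (f l)" using f_poly l unfolding is_poly_def by blast
    then have h: "is_poly_deg (poly_deg (f l)) (f l)" unfolding poly_deg_def by (rule LeastI_ex)
    have "poly_deg (f l) \<in> Sall" unfolding Sall_def using l by blast
    then have "poly_deg (f l) < d" by (rule leMax)
    then show ?thesis using poly_cont[OF h] poly_orth_growth[OF h] by blast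
  qed
  have fm: "\<forall>l\<in>{1..m}. f l \<in> borel_measurable borel"
    using fprops borel_measurable_continuous_onI by blast
  have fc: "\<forall>l\<in>{1..m}. continuous_on nonneg_orthant (f l) \<and> (\<exists>D<d. orth_growth (f l) D)"
    using fprops continuous_on_subset[of UNIV] by blast
  have Kge: "(\<Sum>i\<in>UNIV. N i) + m + 3 \<le> K"
  proof -
    have "0 < CARD('n)" by simp
    then have "(\<Sum>i\<in>UNIV. N i) \<le> CARD('n) * (\<Sum>i\<in>UNIV. N i)" by simp
    then show ?thesis by (simp add: K_def)
  qed
  have ex: "\<exists>w x. cfg_ok K N k q m f p M d w x"
    using meas_to_cfg[OF mu0 Kge M_nonneg] by blast
  have fromfeas: "\<exists>w x. cfg_ok K N k q m f p M d w x \<and> (\<Sum>j<K. w j * \<phi> (x j)) = (\<integral>y. \<phi> y \<partial>\<nu>)"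
    if "\<nu> \<in> feasible_measures N k q m f p M d \<phi>" for \<nu>
    using meas_to_cfg[OF that Kge M_nonneg] by blast
  show ?thesis
  proof (intro conjI)
    obtain w x where wx: "cfg_ok K N k q m f p M d w x"
      "\<forall>w' x'. cfg_ok K N k q m f p M d w' x' \<longrightarrow> (\<Sum>j<K. w' j * \<phi> (x' j)) \<le> (\<Sum>j<K. w j * \<phi> (x j))"
      using cfg_opt[OF ex \<phi>_cont \<phi>g D\<phi>d fc d1] by blast
    obtain \<nu> where \<nu>: "\<nu> \<in> feasible_measures N k q m f p M d \<phi>" "atomic_measure_le K \<nu>"
      "(\<integral>y. \<phi> y \<partial>\<nu>) = (\<Sum>j<K. w j * \<phi> (x j))"
      using cfg_to_meas[OF wx(1) phim fm] by blast
    show "\<exists>\<mu>\<in>feasible_measures N k q m f p M d \<phi>.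
            atomic_measure_le (CARD('n) * (\<Sum>i\<in>UNIV. N i) + m + 3) \<mu> \<and>
            (\<forall>\<nu>\<in>feasible_measures N k q m f p M d \<phi>. (\<integral>x. \<phi> x \<partial>\<nu>) \<le> (\<integral>x. \<phi> x \<partial>\<mu>))"
    proof (intro bexI conjI ballI)
      show "atomic_measure_le (CARD('n) * (\<Sum>i\<in>UNIV. N i) + m + 3) \<nu>" using \<nu>(2) by (simp add: K_def)
      fix \<nu>' assume "\<nu>' \<in> feasible_measures N k q m f p M d \<phi>"
      then obtain w' x' where "cfg_ok K N k q m f p M d w' x'" "(\<Sum>j<K. w' j * \<phi> (x' j)) = (\<integral>y. \<phi> y \<partial>\<nu>')"
        using fromfeas by blast
      then show "(\<integral>x. \<phi> x \<partial>\<nu>') \<le> (\<integral>x. \<phi> x \<partial>\<nu>)" using wx(2) \<nu>(3) by metis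
    qed (rule \<nu>(1))
  next
    have mcont: "continuous_on nonneg_orthant (\<lambda>y. - \<phi> y)" using \<phi>_cont by (intro continuous_intros)
    have mg: "orth_growth (\<lambda>y. - \<phi> y) D\<phi>" using \<phi>g unfolding orth_growth_def by simp
    obtain w x where wx: "cfg_ok K N k q m f p M d w x"
      "\<forall>w' x'. cfg_ok K N k q m f p M d w' x' \<longrightarrow> (\<Sum>j<K. w' j * - \<phi> (x' j)) \<le> (\<Sum>j<K. w j * - \<phi> (x j))"
      using cfg_opt[OF ex mcont mg D\<phi>d fc d1] by blast
    obtain \<nu> where \<nu>: "\<nu> \<in> feasible_measures N k q m f p M d \<phi>" "atomic_measure_le K \<nu>"
      "(\<integral>y. \<phi> y \<partial>\<nu>) = (\<Sum>j<K. w j * \<phi> (x j))"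
      using cfg_to_meas[OF wx(1) phim fm] by blast
    show "\<exists>\<mu>\<in>feasible_measures N k q m f p M d \<phi>.
            atomic_measure_le (CARD('n) * (\<Sum>i\<in>UNIV. N i) + m + 3) \<mu> \<and>
            (\<forall>\<nu>\<in>feasible_measures N k q m f p M d \<phi>. (\<integral>x. \<phi> x \<partial>\<mu>) \<le> (\<integral>x. \<phi> x \<partial>\<nu>))"
    proof (intro bexI conjI ballI)
      show "atomic_measure_le (CARD('n) * (\<Sum>i\<in>UNIV. N i) + m + 3) \<nu>" using \<nu>(2) by (simp add: K_def)
      fix \<nu>' assume "\<nu>' \<in> feasible_measures N k q m f p M d \<phi>"
      then obtain w' x' where c': "cfg_ok K N k q m f p M d w' x'" "(\<Sum>j<K. w' j * \<phi> (x' j)) = (\<integral>y. \<phi> y \<partial>\<nu>')"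
        using fromfeas by blast
      have "(\<Sum>j<K. w' j * - \<phi> (x' j)) \<le> (\<Sum>j<K. w j * - \<phi> (x j))" using wx(2) c'(1) by blast
      then have "(\<Sum>j<K. w j * \<phi> (x j)) \<le> (\<Sum>j<K. w' j * \<phi> (x' j))" by (simp add: sum_negf)
      then show "(\<integral>x. \<phi> x \<partial>\<nu>) \<le> (\<integral>x. \<phi> x \<partial>\<nu>')" using c'(2) \<nu>(3) by simp
    qed (rule \<nu>(1))
  qed
qed

end
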